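(* Up to isomorphism in $\mathrm{rgr}\,A$, the graded simple right $A$-modules are exactly: $X\langle n\rangle$ for $n\in\mathbb{Z}$, $Y\langle n\rangle$ for $n\in\mathbb{Z}$, and $M_\lambda$ for $\lambda\in k\setminus\mathbb{Z}$; these are pairwise non-isomorphic.
   Context: $k$ is an algebraically closed field of characteristic $0$; $A=k\langle x,y\rangle/(xy-yx-1)$ is the first Weyl algebra graded by $\deg x=1$, $\deg y=-1$; $z=xy$, so $A_0=k[z]$. $\mathrm{rgr}\,A$ is the category of graded right $A$-modules with degree-preserving maps; $M\langle n\rangle_j=M_{j-n}$. $X=A/xA$, $Y=(A/yA)\langle1\rangle$, and $M_\lambda=A/(z+\lambda)A$. *)

theory Defs
  imports "HOL-Computational_Algebra.Polynomial"
begin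

text \<open>A is realised (faithfully, char 0) as the k-subalgebra of End_k(k[t]) generated by
  x = d/dt and y = multiplication by t; the product is composition, ab = a o b.
  Indeed (x o y - y o x) p = p.\<close>

type_synonym 'k wop = "'k poly \<Rightarrow> 'k poly"

definition oadd :: "'k::field wop \<Rightarrow> 'k wop \<Rightarrow> 'k wop" where
  "oadd a b = (\<lambda>p. a p + b p)"

definition oscal :: "'k::field \<Rightarrow> 'k wop" where
  "oscal c = (\<lambda>p. smult c p)"

definition ozero :: "'k::field wop" where
  "ozero = (\<lambda>p. 0)"

definition wx :: "'k::field wop" where
  "wx = pderiv"

definition wy :: "'k::field wop" where
  "wy = (\<lambda>p. pCons 0 p)"

inductive_set weyl :: "'k::field wop set" where
  weyl_x: "wx \<in> weyl"
| weyl_y: "wy \<in> weyl"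
| weyl_sc: "oscal c \<in> weyl"
| weyl_add: "a \<in> weyl \<Longrightarrow> b \<in> weyl \<Longrightarrow> oadd a b \<in> weyl"
| weyl_mult: "a \<in> weyl \<Longrightarrow> b \<in> weyl \<Longrightarrow> a \<circ> b \<in> weyl"

inductive whom :: "int \<Rightarrow> 'k::field wop \<Rightarrow> bool" where
  whom_x: "whom 1 wx"
| whom_y: "whom (-1) wy"
| whom_sc: "whom 0 (oscal c)"
| whom_add: "whom n a \<Longrightarrow> whom n b \<Longrightarrow> whom n (oadd a b)"
| whom_mult: "whom m a \<Longrightarrow> whom n b \<Longrightarrow> whom (m + n) (a \<circ> b)"

record ('a, 'v) rgr =
  gcar :: "'v set"
  gadd :: "'v \<Rightarrow> 'v \<Rightarrow> 'v"
  gzero :: "'v"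
  gact :: "'v \<Rightarrow> 'a \<Rightarrow> 'v"   (* right action  m . a ; 'a = operators of A *)
  gdeg :: "int \<Rightarrow> 'v set"

definition gsum :: "('a, 'v) rgr \<Rightarrow> 'v list \<Rightarrow> 'v" where
  "gsum M xs = foldr (gadd M) xs (gzero M)"

definition is_grmod :: "('k::field wop, 'v) rgr \<Rightarrow> bool" where
  "is_grmod M \<longleftrightarrow>
     gzero M \<in> gcar M \<and>
     (\<forall>u\<in>gcar M. \<forall>v\<in>gcar M. gadd M u v \<in> gcar M) \<and>
     (\<forall>u\<in>gcar M. \<forall>v\<in>gcar M. \<forall>w\<in>gcar M. gadd M (gadd M u v) w = gadd M u (gadd M v w)) \<and>
     (\<forall>u\<in>gcar M. \<forall>v\<in>gcar M. gadd M u v = gadd M v u) \<and>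
     (\<forall>u\<in>gcar M. gadd M (gzero M) u = u) \<and>
     (\<forall>u\<in>gcar M. \<exists>v\<in>gcar M. gadd M u v = gzero M) \<and>
     (\<forall>u\<in>gcar M. \<forall>a\<in>weyl. gact M u a \<in> gcar M) \<and>
     (\<forall>u\<in>gcar M. \<forall>a\<in>weyl. \<forall>b\<in>weyl. gact M u (oadd a b) = gadd M (gact M u a) (gact M u b)) \<and>
     (\<forall>u\<in>gcar M. \<forall>v\<in>gcar M. \<forall>a\<in>weyl. gact M (gadd M u v) a = gadd M (gact M u a) (gact M v a)) \<and>
     (\<forall>u\<in>gcar M. \<forall>a\<in>weyl. \<forall>b\<in>weyl. gact M u (a \<circ> b) = gact M (gact M u a) b) \<and>
     (\<forall>u\<in>gcar M. gact M u (\<lambda>p. p) = u) \<and>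
     (\<forall>j. gdeg M j \<subseteq> gcar M \<and> gzero M \<in> gdeg M j \<and>
          (\<forall>u\<in>gdeg M j. \<forall>v\<in>gdeg M j. gadd M u v \<in> gdeg M j)) \<and>
     (\<forall>j n u a. u \<in> gdeg M j \<longrightarrow> whom n a \<longrightarrow> gact M u a \<in> gdeg M (j + n)) \<and>
     (\<forall>u\<in>gcar M. \<exists>js f. distinct js \<and> (\<forall>j\<in>set js. f j \<in> gdeg M j) \<and>
          u = gsum M (map f js)) \<and>
     (\<forall>js f. distinct js \<longrightarrow> (\<forall>j\<in>set js. f j \<in> gdeg M j) \<longrightarrow>
          gsum M (map f js) = gzero M \<longrightarrow> (\<forall>j\<in>set js. f j = gzero M))"

definition is_gsub :: "('k::field wop, 'v) rgr \<Rightarrow> 'v set \<Rightarrow> bool" where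
  "is_gsub M N \<longleftrightarrow> N \<subseteq> gcar M \<and> gzero M \<in> N \<and>
     (\<forall>u\<in>N. \<forall>v\<in>N. gadd M u v \<in> N) \<and>
     (\<forall>u\<in>N. \<forall>a\<in>weyl. gact M u a \<in> N) \<and>
     (\<forall>u\<in>N. \<exists>js f. distinct js \<and> (\<forall>j\<in>set js. f j \<in> gdeg M j \<inter> N) \<and>
          u = gsum M (map f js))"

definition is_simple :: "('k::field wop, 'v) rgr \<Rightarrow> bool" where
  "is_simple M \<longleftrightarrow> gcar M \<noteq> {gzero M} \<and>
     (\<forall>N. is_gsub M N \<longrightarrow> N = {gzero M} \<or> N = gcar M)"

definition is_ghom :: "('k::field wop, 'v) rgr \<Rightarrow> ('k wop, 'w) rgr \<Rightarrow> ('v \<Rightarrow> 'w) \<Rightarrow> bool" where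
  "is_ghom M N f \<longleftrightarrow> (\<forall>u\<in>gcar M. f u \<in> gcar N) \<and>
     (\<forall>u\<in>gcar M. \<forall>v\<in>gcar M. f (gadd M u v) = gadd N (f u) (f v)) \<and>
     (\<forall>u\<in>gcar M. \<forall>a\<in>weyl. f (gact M u a) = gact N (f u) a) \<and>
     (\<forall>j. \<forall>u\<in>gdeg M j. f u \<in> gdeg N j)"

definition g_iso :: "('k::field wop, 'v) rgr \<Rightarrow> ('k wop, 'w) rgr \<Rightarrow> bool" where
  "g_iso M N \<longleftrightarrow> (\<exists>f. is_ghom M N f \<and> bij_betw f (gcar M) (gcar N))"

definition gshift :: "int \<Rightarrow> ('a, 'v) rgr \<Rightarrow> ('a, 'v) rgr" where
  "gshift n M = M\<lparr>gdeg := (\<lambda>j. gdeg M (j - n))\<rparr>"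

definition wcoset :: "'k::field wop \<Rightarrow> 'k wop \<Rightarrow> 'k wop set" where
  "wcoset a b = {oadd b (a \<circ> c) | c. c \<in> weyl}"

definition qmod :: "'k::field wop \<Rightarrow> ('k wop, 'k wop set) rgr" where
  "qmod a = \<lparr> gcar = {wcoset a b | b. b \<in> weyl},
              gadd = (\<lambda>C D. wcoset a (oadd (SOME b. b \<in> C) (SOME b. b \<in> D))),
              gzero = wcoset a ozero,
              gact = (\<lambda>C r. wcoset a ((SOME b. b \<in> C) \<circ> r)),
              gdeg = (\<lambda>j. {wcoset a b | b. whom j b}) \<rparr>"

definition Xmod :: "('k::field wop, 'k wop set) rgr" where
  "Xmod = qmod wx"

definition Ymod :: "('k::field wop, 'k wop set) rgr" where
  "Ymod = gshift 1 (qmod wy)"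

definition Mmod :: "'k::field \<Rightarrow> ('k wop, 'k wop set) rgr" where
  "Mmod l = qmod (oadd (wx \<circ> wy) (oscal l))"

end

theory Submission
  imports Defs "HOL-Library.Function_Algebras"
begin


lemma fun_sum_apply: "(\<Sum>i\<in>S. f i) x = (\<Sum>i\<in>S. f i x)"
  by (induct S rule: infinite_finite_induct) auto

definition hopc :: "int \<Rightarrow> 'k::field_char_0 poly \<Rightarrow> 'k poly \<Rightarrow> nat \<Rightarrow> 'k" where
  "hopc n Q p i = (if 0 \<le> int i + n then coeff p (nat (int i + n)) * poly Q (of_int (int i + n)) else 0)"

definition hop :: "int \<Rightarrow> 'k::field_char_0 poly \<Rightarrow> 'k wop" where
  "hop n Q p = Abs_poly (hopc n Q p)"

definition good :: "int \<Rightarrow> 'k::field_char_0 poly \<Rightarrow> bool" where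
  "good n Q \<longleftrightarrow> (\<forall>j::nat. int j < n \<longrightarrow> poly Q (of_nat j) = 0)"

lemma coeff_hop: "coeff (hop n Q p) i = hopc n Q p i"
proof -
  have "coeff (Abs_poly (hopc n Q p)) = hopc n Q p"
  proof (rule coeff_Abs_poly[of "degree p + nat \<bar>n\<bar>"])
    fix i assume "degree p + nat \<bar>n\<bar> < i"
    then have "0 \<le> int i + n \<longrightarrow> nat (int i + n) > degree p" by linarith
    then show "hopc n Q p i = 0" unfolding hopc_def by (auto simp: coeff_eq_0)
  qed
  then show ?thesis by (simp add: hop_def)
qed

lemma hop_poly_cong: assumes "\<And>x. poly P x = poly Q x" shows "hop n P = hop n Q"
proof -
  have "poly P = poly Q" using assms by (rule ext)
  then show ?thesis unfolding hop_def hopc_def by (subst \<open>poly P = poly Q\<close>) (rule refl)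
qed

lemma hop_add_arg: "hop n Q (p + q) = hop n Q p + hop n Q q"
  by (rule poly_eqI) (simp add: coeff_hop hopc_def algebra_simps)

lemma hop_zero_arg: "hop n Q 0 = 0"
  by (rule poly_eqI) (simp add: coeff_hop hopc_def)

lemma hop_add_poly: "hop n (P + Q) = hop n P + hop n Q"
  by (rule ext, rule poly_eqI) (simp add: coeff_hop hopc_def algebra_simps)

lemma hop_zero_poly: "hop n 0 = 0"
  by (rule ext, rule poly_eqI) (simp add: coeff_hop hopc_def)

lemma hop_sum_poly: "hop n (\<Sum>i\<in>I. P i) = (\<Sum>i\<in>I. hop n (P i))"
  by (induct I rule: infinite_finite_induct) (auto simp: hop_zero_poly hop_add_poly)

lemma hop_minus_poly: "hop n (P - Q) = hop n P - hop n Q"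
  by (rule ext, rule poly_eqI) (simp add: coeff_hop hopc_def algebra_simps)

lemma hop_comp:
  assumes "good n Q"
  shows "hop m P \<circ> hop n Q = hop (m + n) (Q * (P \<circ>\<^sub>p [:- of_int n, 1:]))"
proof (rule ext, rule poly_eqI)
  fix p i
  show "coeff ((hop m P \<circ> hop n Q) p) i = coeff (hop (m + n) (Q * (P \<circ>\<^sub>p [:- of_int n, 1:])) p) i"
  proof (cases "0 \<le> int i + m")
    case True
    have e1: "int (nat (int i + m)) = int i + m" using True by simp
    show ?thesis using True by (simp add: coeff_hop hopc_def poly_pcompose e1 add.assoc mult_ac)
  next
    case False
    show ?thesis
    proof (cases "0 \<le> int i + (m + n)")
      case True
      define j where "j = nat (int i + (m + n))"
      have "int j < n" using False True unfolding j_def by linarith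
      then have "poly Q (of_nat j) = 0" using assms unfolding good_def by blast
      moreover have "(of_nat j :: 'a) = of_int (int i + (m + n))" using True unfolding j_def
        by (metis of_int_of_nat_eq nat_0_le)
      ultimately show ?thesis using False True by (simp add: coeff_hop hopc_def)
    next
      case False2: False
      then show ?thesis using False by (simp add: coeff_hop hopc_def)
    qed
  qed
qed

lemma good_add: "good n P \<Longrightarrow> good n Q \<Longrightarrow> good n (P + Q)"
  by (simp add: good_def)
lemma good_minus: "good n P \<Longrightarrow> good n Q \<Longrightarrow> good n (P - Q)"
  by (simp add: good_def)
lemma good_zero: "good n 0" by (simp add: good_def)
lemma good_sum: "(\<And>i. i \<in> I \<Longrightarrow> good n (P i)) \<Longrightarrow> good n (\<Sum>i\<in>I. P i)"
  by (induct I rule: infinite_finite_induct) (auto simp: good_zero good_add)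
lemma good_le: "n \<le> 0 \<Longrightarrow> good n Q" by (simp add: good_def)

lemma good_comp:
  assumes "good m P" "good n Q"
  shows "good (m + n) (Q * (P \<circ>\<^sub>p [:- of_int n, 1:]))"
  unfolding good_def
proof (intro allI impI)
  fix j :: nat assume j: "int j < m + n"
  show "poly (Q * (P \<circ>\<^sub>p [:- of_int n, 1:])) (of_nat j) = 0"
  proof (cases "int j < n")
    case True then show ?thesis using assms(2) by (simp add: good_def)
  next
    case False
    define k where "k = nat (int j - n)"
    have "int k < m" using False j unfolding k_def by linarith
    then have "poly P (of_nat k) = 0" using assms(1) by (simp add: good_def)
    moreover have "int k = int j - n" using False unfolding k_def by simp
    then have "(of_int (int k) :: 'a) = of_int (int j - n)" by simp
    then have "(of_nat k :: 'a) = of_nat j - of_int n" by simp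
    ultimately show ?thesis by (simp add: poly_pcompose)
  qed
qed

lemma poly_nat_roots_zero:
  fixes P :: "'k::field_char_0 poly"
  assumes "\<And>j::nat. poly P (of_nat j) = 0" shows "P = 0"
proof (rule ccontr)
  assume "P \<noteq> 0"
  then have "finite {x. poly P x = 0}" by (rule poly_roots_finite)
  moreover have "range (of_nat :: nat \<Rightarrow> 'k) \<subseteq> {x. poly P x = 0}" using assms by auto
  ultimately have "finite (range (of_nat :: nat \<Rightarrow> 'k))" by (rule finite_subset[rotated])
  moreover have "inj (of_nat :: nat \<Rightarrow> 'k)" by (rule injI) simp
  ultimately show False using finite_imageD by fastforce
qed

lemma hop_monom: "coeff (hop n Q (monom 1 j)) i = (if int i + n = int j then poly Q (of_nat j) else 0)"
  by (auto simp: coeff_hop hopc_def coeff_monom)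

lemma hop_sum_zero:
  assumes fin: "finite S" and g: "\<And>n. n \<in> S \<Longrightarrow> good n (P n)"
    and z: "(\<Sum>n\<in>S. hop n (P n)) = 0" and n0: "n0 \<in> S"
  shows "P n0 = 0"
proof (rule poly_nat_roots_zero)
  fix j :: nat
  show "poly (P n0) (of_nat j) = 0"
  proof (cases "int j < n0")
    case True then show ?thesis using g[OF n0] by (simp add: good_def)
  next
    case False
    define i where "i = nat (int j - n0)"
    have ii: "int i + n0 = int j" using False unfolding i_def by linarith
    have "0 = coeff ((\<Sum>n\<in>S. hop n (P n)) (monom 1 j)) i" using z by simp
    also have "\<dots> = (\<Sum>n\<in>S. if int i + n = int j then poly (P n) (of_nat j) else 0)"
      by (simp add: fun_sum_apply coeff_sum hop_monom)
    also have "\<dots> = (\<Sum>n\<in>S. if n = n0 then poly (P n) (of_nat j) else 0)"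
      by (rule sum.cong) (use ii in auto)
    also have "\<dots> = poly (P n0) (of_nat j)" using fin n0 by simp
    finally show ?thesis by simp
  qed
qed

lemma good_hop_zero: "good n Q \<Longrightarrow> hop n Q = 0 \<Longrightarrow> Q = 0"
  using hop_sum_zero[of "{n}" "\<lambda>_. Q" n] by simp



lemma oadd_eq: "oadd a b = a + b" by (rule ext) (simp add: oadd_def)
lemma ozero_eq: "ozero = 0" by (rule ext) (simp add: ozero_def)

lemma wx_hop: "(wx :: 'k::field_char_0 wop) = hop 1 [:0,1:]"
proof (rule ext, rule poly_eqI)
  fix p :: "'k poly" and i
  have "int (nat (int i + 1)) = int i + 1" by simp
  have "nat (int i + 1) = Suc i" by simp
  then show "coeff (wx p) i = coeff (hop 1 [:0, 1:] p) i"
    by (simp add: wx_def coeff_pderiv coeff_hop hopc_def algebra_simps)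
qed

lemma wy_hop: "(wy :: 'k::field_char_0 wop) = hop (-1) 1"
proof (rule ext, rule poly_eqI)
  fix p :: "'k poly" and i
  show "coeff (wy p) i = coeff (hop (-1) 1 p) i"
  proof (cases i)
    case 0 then show ?thesis by (simp add: wy_def coeff_hop hopc_def)
  next
    case (Suc j)
    then have "nat (int i - 1) = j" by simp
    then show ?thesis using Suc by (simp add: wy_def coeff_hop hopc_def)
  qed
qed

lemma oscal_hop: "(oscal c :: 'k::field_char_0 wop) = hop 0 [:c:]"
  by (rule ext, rule poly_eqI) (simp add: oscal_def coeff_hop hopc_def mult.commute)

lemma whom_hop: "whom n (a :: 'k::field_char_0 wop) \<Longrightarrow> \<exists>Q. good n Q \<and> a = hop n Q"
proof (induct rule: whom.induct)
  case whom_x then show ?case by (intro exI[of _ "[:0,1:]"]) (simp add: wx_hop good_def)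
next
  case whom_y then show ?case by (intro exI[of _ 1]) (simp add: wy_hop good_def)
next
  case (whom_sc c) then show ?case by (intro exI[of _ "[:c:]"]) (simp add: oscal_hop good_def)
next
  case (whom_add n a b) then show ?case
    by (metis good_add hop_add_poly oadd_eq)
next
  case (whom_mult m a n b)
  then obtain P Q where "good m P" "a = hop m P" "good n Q" "b = hop n Q" by blast
  then show ?case using hop_comp good_comp by blast
qed

lemma whom_weyl: "whom n a \<Longrightarrow> a \<in> weyl"
  by (induct rule: whom.induct) (blast intro: weyl.intros)+

lemma hop_cong: "n = m \<Longrightarrow> (\<And>x. poly P x = poly Q x) \<Longrightarrow> hop n P = hop m Q"
  using hop_poly_cong by blast

lemma hop_comp0: "hop 0 P \<circ> hop 0 Q = hop 0 (Q * P)"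
proof -
  have "hop 0 P \<circ> hop 0 Q = hop (0+0) (Q * (P \<circ>\<^sub>p [:- of_int 0, 1:]))" by (rule hop_comp) (simp add: good_def)
  also have "\<dots> = hop 0 (Q * P)" by (rule hop_cong) (simp_all add: poly_pcompose poly_pcompose)
  finally show ?thesis .
qed

lemma whom_hop0: "whom 0 (hop 0 (Q :: 'k::field_char_0 poly))"
proof (induct Q)
  case 0
  have "whom 0 (oscal (0::'k))" by (rule whom_sc)
  moreover have "oscal (0::'k) = hop 0 0" by (simp add: oscal_hop)
  ultimately show ?case by simp
next
  case (pCons c Q)
  have yx: "hop 0 [:0,1:] = (wy \<circ> wx :: 'k wop)"
  proof -
    have "(wy \<circ> wx :: 'k wop) = hop (-1 + 1) ([:0,1:] * (1 \<circ>\<^sub>p [:- of_int 1, 1:]))"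
      unfolding wx_hop wy_hop by (rule hop_comp) (simp add: good_def)
    also have "\<dots> = hop 0 [:0,1:]" by (rule hop_cong) (simp_all add: poly_pcompose)
    finally show ?thesis by simp
  qed
  have w1: "whom 0 (wy \<circ> wx :: 'k wop)" using whom_mult[OF whom_y whom_x] by simp
  have "hop 0 (pCons c Q) = hop 0 [:c:] + hop 0 ([:0,1:] * Q)"
    by (subst hop_add_poly[symmetric]) (rule hop_cong, simp_all add: poly_pCons)
  also have "\<dots> = oadd (oscal c) (hop 0 Q \<circ> (wy \<circ> wx))"
    by (simp only: oadd_eq oscal_hop hop_comp0 yx[symmetric])
  finally have e: "hop 0 (pCons c Q) = oadd (oscal c) (hop 0 Q \<circ> (wy \<circ> wx))" .
  have "whom (0+0) (hop 0 Q \<circ> (wy \<circ> wx))" by (rule whom_mult[OF pCons(2) w1])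
  then have "whom 0 (hop 0 Q \<circ> (wy \<circ> wx))" by simp
  then show ?case unfolding e by (rule whom_add[OF whom_sc])
qed

lemma whom_hop_neg: "whom (- int k) (hop (- int k) (1 :: 'k::field_char_0 poly))"
proof (induct k)
  case 0 then show ?case using whom_hop0[of 1] by simp
next
  case (Suc k)
  have "(wy :: 'k wop) \<circ> hop (- int k) 1 = hop (-1 + - int k) (1 * (1 \<circ>\<^sub>p [:- of_int (- int k), 1:]))"
    unfolding wy_hop by (rule hop_comp) (simp add: good_def)
  also have "\<dots> = hop (- int (Suc k)) 1" by (rule hop_cong) (simp_all add: poly_pcompose)
  finally have e: "(wy :: 'k wop) \<circ> hop (- int k) 1 = hop (- int (Suc k)) 1" .
  have "whom (-1 + - int k) ((wy :: 'k wop) \<circ> hop (- int k) 1)" by (rule whom_mult[OF whom_y Suc])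
  then show ?case by (simp add: e)
qed

lemma whom_hop_nonpos:
  assumes "n \<le> 0" shows "whom n (hop n (Q :: 'k::field_char_0 poly))"
proof -
  obtain k where k: "n = - int k" using assms by (metis minus_minus neg_0_le_iff_le nonneg_int_cases)
  have "hop 0 (Q \<circ>\<^sub>p [:of_int n, 1:]) \<circ> hop n 1 = hop (0 + n) (1 * ((Q \<circ>\<^sub>p [:of_int n, 1:]) \<circ>\<^sub>p [:- of_int n, 1:]))"
    by (rule hop_comp) (simp add: good_le assms)
  also have "\<dots> = hop n Q" by (rule hop_cong) (simp_all add: poly_pcompose poly_pcompose)
  finally have e: "hop 0 (Q \<circ>\<^sub>p [:of_int n, 1:]) \<circ> hop n 1 = hop n Q" .
  have "whom (0 + n) (hop 0 (Q \<circ>\<^sub>p [:of_int n, 1:]) \<circ> hop n 1)"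
    by (rule whom_mult[OF whom_hop0]) (use whom_hop_neg[of k] k in simp)
  then show ?thesis by (simp add: e)
qed

lemma whom_hop_nat: "good (int k) Q \<Longrightarrow> whom (int k) (hop (int k) (Q :: 'k::field_char_0 poly))"
proof (induct k arbitrary: Q)
  case 0 then show ?case using whom_hop0 by simp
next
  case (Suc k)
  have "poly Q (of_nat k) = 0" using Suc(2) by (simp add: good_def)
  then obtain R where R: "Q = [:- of_nat k, 1:] * R" using poly_eq_0_iff_dvd by (metis dvdE)
  have gR: "good (int k) R"
    unfolding good_def
  proof (intro allI impI)
    fix j :: nat assume j: "int j < int k"
    then have "poly Q (of_nat j) = 0" using Suc(2) by (simp add: good_def)
    moreover have "(of_nat j :: 'k) - of_nat k \<noteq> 0" using j by simp
    ultimately show "poly R (of_nat j) = 0" by (simp add: R)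
  qed
  have "(wx :: 'k wop) \<circ> hop (int k) R = hop (1 + int k) (R * ([:0,1:] \<circ>\<^sub>p [:- of_int (int k), 1:]))"
    unfolding wx_hop by (rule hop_comp[OF gR])
  also have "\<dots> = hop (int (Suc k)) Q" by (rule hop_cong) (simp_all add: poly_pcompose R algebra_simps)
  finally have e: "(wx :: 'k wop) \<circ> hop (int k) R = hop (int (Suc k)) Q" .
  have "whom (1 + int k) ((wx :: 'k wop) \<circ> hop (int k) R)" by (rule whom_mult[OF whom_x Suc(1)[OF gR]])
  then show ?case by (simp add: e)
qed

lemma whom_good: "good n Q \<Longrightarrow> whom n (hop n (Q :: 'k::field_char_0 poly))"
proof (cases "n \<le> 0")
  case True then show ?thesis by (rule whom_hop_nonpos)
next
  case False
  then obtain k where "n = int k" by (metis linorder_not_le nonneg_int_cases order_less_imp_le)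
  then show "good n Q \<Longrightarrow> ?thesis" using whom_hop_nat by blast
qed

lemma weyl_good: "good n Q \<Longrightarrow> hop n (Q :: 'k::field_char_0 poly) \<in> weyl"
  using whom_good whom_weyl by blast

lemma whom_zero: "whom n (0 :: 'k::field_char_0 wop)"
  using whom_good[OF good_zero, of n] by (simp add: hop_zero_poly)



lemma regroup:
  fixes d :: "'i \<Rightarrow> int" and C :: "'i \<Rightarrow> 'k::field_char_0 poly"
  assumes "finite I" "\<And>i. i \<in> I \<Longrightarrow> good (d i) (C i)"
  shows "\<exists>S P. finite S \<and> (\<forall>n\<in>S. good n (P n)) \<and> (\<Sum>i\<in>I. hop (d i) (C i)) = (\<Sum>n\<in>S. hop n (P n))"
proof (intro exI conjI)
  let ?P = "\<lambda>n. \<Sum>i\<in>{i\<in>I. d i = n}. C i"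
  show "finite (d ` I)" using assms by simp
  show "\<forall>n\<in>d ` I. good n (?P n)"
  proof
    fix n assume "n \<in> d ` I"
    show "good n (?P n)" by (rule good_sum) (use assms(2) in fastforce)
  qed
  have "(\<Sum>i\<in>I. hop (d i) (C i)) = (\<Sum>n\<in>d ` I. \<Sum>i\<in>{i\<in>I. d i = n}. hop (d i) (C i))"
    by (rule sum.image_gen[OF assms(1)])
  also have "\<dots> = (\<Sum>n\<in>d ` I. \<Sum>i\<in>{i\<in>I. d i = n}. hop n (C i))"
    by (rule sum.cong[OF refl], rule sum.cong) auto
  also have "\<dots> = (\<Sum>n\<in>d ` I. hop n (?P n))" by (simp add: hop_sum_poly)
  finally show "(\<Sum>i\<in>I. hop (d i) (C i)) = (\<Sum>n\<in>d ` I. hop n (?P n))" .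
qed

lemma sum_comp_left: "(\<Sum>i\<in>S. f i) \<circ> g = (\<Sum>i\<in>S. f i \<circ> g)"
  by (rule ext) (simp add: fun_sum_apply)

lemma hop_sum_arg: "hop n Q (\<Sum>i\<in>I. p i) = (\<Sum>i\<in>I. hop n Q (p i))"
  by (induct I rule: infinite_finite_induct) (auto simp: hop_add_arg hop_zero_arg)

lemma hop_comp_sum: "hop n Q \<circ> (\<Sum>i\<in>S. g i) = (\<Sum>i\<in>S. hop n Q \<circ> g i)"
  by (rule ext) (simp add: fun_sum_apply hop_sum_arg)

lemma weyl_decomp:
  "a \<in> weyl \<Longrightarrow> \<exists>S P. finite S \<and> (\<forall>n\<in>S. good n (P n)) \<and> (a :: 'k::field_char_0 wop) = (\<Sum>n\<in>S. hop n (P n))"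
proof (induct rule: weyl.induct)
  case weyl_x then show ?case
    by (intro exI[of _ "{1}"] exI[of _ "\<lambda>_. [:0,1:]"]) (simp add: wx_hop good_def)
next
  case weyl_y then show ?case
    by (intro exI[of _ "{-1}"] exI[of _ "\<lambda>_. 1"]) (simp add: wy_hop good_def)
next
  case (weyl_sc c) then show ?case
    by (intro exI[of _ "{0}"] exI[of _ "\<lambda>_. [:c:]"]) (simp add: oscal_hop good_def)
next
  case (weyl_add a b)
  then obtain S P T R where S: "finite S" "\<forall>n\<in>S. good n (P n)" "a = (\<Sum>n\<in>S. hop n (P n))"
    and T: "finite T" "\<forall>n\<in>T. good n (R n)" "b = (\<Sum>n\<in>T. hop n (R n))" by blast
  let ?d = "case_sum (\<lambda>n. n) (\<lambda>n. n)" and ?C = "case_sum P R"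
  have e: "oadd a b = (\<Sum>i\<in>S <+> T. hop (?d i) (?C i))"
    by (simp add: oadd_eq S T sum.Plus o_def)
  have fin: "finite (S <+> T)" using S T by simp
  have gd: "\<And>i. i \<in> S <+> T \<Longrightarrow> good (?d i) (?C i)" using S T by auto
  obtain S' P' where S': "finite S'" "\<forall>n\<in>S'. good n (P' n)"
     "(\<Sum>i\<in>S <+> T. hop (?d i) (?C i)) = (\<Sum>n\<in>S'. hop n (P' n))" using regroup[of "S <+> T" ?d ?C, OF fin gd] by blast
  show ?case by (rule exI[of _ S'], rule exI[of _ P']) (use S' e in simp)
next
  case (weyl_mult a b)
  then obtain S P T R where S: "finite S" "\<forall>n\<in>S. good n (P n)" "a = (\<Sum>n\<in>S. hop n (P n))"
    and T: "finite T" "\<forall>n\<in>T. good n (R n)" "b = (\<Sum>n\<in>T. hop n (R n))" by blast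
  let ?d = "\<lambda>(n, m). n + m" and ?C = "\<lambda>(n, m). R m * (P n \<circ>\<^sub>p [:- of_int m, 1:])"
  have "a \<circ> b = (\<Sum>n\<in>S. \<Sum>m\<in>T. hop n (P n) \<circ> hop m (R m))"
    by (simp add: S T sum_comp_left hop_comp_sum)
  also have "\<dots> = (\<Sum>n\<in>S. \<Sum>m\<in>T. hop (n + m) (R m * (P n \<circ>\<^sub>p [:- of_int m, 1:])))"
    using T(2) by (intro sum.cong refl hop_comp) auto
  also have "\<dots> = (\<Sum>i\<in>S \<times> T. hop (?d i) (?C i))"
    by (simp add: sum.cartesian_product case_prod_beta)
  finally have e: "a \<circ> b = (\<Sum>i\<in>S \<times> T. hop (?d i) (?C i))" .
  have fin: "finite (S \<times> T)" using S T by simp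
  have gd: "\<And>i. i \<in> S \<times> T \<Longrightarrow> good (?d i) (?C i)" using S(2) T(2) by (auto intro!: good_comp)
  obtain S' P' where S': "finite S'" "\<forall>n\<in>S'. good n (P' n)"
     "(\<Sum>i\<in>S \<times> T. hop (?d i) (?C i)) = (\<Sum>n\<in>S'. hop n (P' n))" using regroup[of "S \<times> T" ?d ?C, OF fin gd] by blast
  show ?case by (rule exI[of _ S'], rule exI[of _ P']) (use S' e in simp)
qed

lemma weyl_hop_add: "a \<in> (weyl :: 'k::field_char_0 wop set) \<Longrightarrow> a (p + q) = a p + a q"
  using weyl_decomp[of a] by (auto simp: fun_sum_apply hop_add_arg sum.distrib)

lemma weyl_hop_zero: "a \<in> (weyl :: 'k::field_char_0 wop set) \<Longrightarrow> a 0 = 0"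
  using weyl_decomp[of a] by (auto simp: fun_sum_apply hop_zero_arg)

lemma weyl_comp_add: "a \<in> (weyl :: 'k::field_char_0 wop set) \<Longrightarrow> a \<circ> (b + c) = (a \<circ> b) + (a \<circ> c)"
proof (rule ext)
  fix p assume a: "a \<in> weyl"
  show "(a \<circ> (b + c)) p = ((a \<circ> b) + (a \<circ> c)) p" using weyl_hop_add[OF a, of "b p" "c p"] by simp
qed

lemma weyl_hop_neg: "a \<in> (weyl :: 'k::field_char_0 wop set) \<Longrightarrow> a (- p) = - a p"
proof -
  assume a: "a \<in> weyl"
  have "a p + a (- p) = 0" using weyl_hop_add[OF a, of p "- p"] weyl_hop_zero[OF a] by simp
  then show ?thesis by (simp add: eq_neg_iff_add_eq_0 add.commute)
qed

lemma weyl_comp_minus: "a \<in> (weyl :: 'k::field_char_0 wop set) \<Longrightarrow> a \<circ> (b - c) = (a \<circ> b) - (a \<circ> c)"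
proof (rule ext)
  fix p assume a: "a \<in> weyl"
  have "a (b p - c p) = a (b p) - a (c p)"
    by (simp only: diff_conv_add_uminus weyl_hop_add[OF a] weyl_hop_neg[OF a])
  then show "(a \<circ> (b - c)) p = ((a \<circ> b) - (a \<circ> c)) p" by simp
qed

lemma weyl_comp_zero: "a \<in> (weyl :: 'k::field_char_0 wop set) \<Longrightarrow> a \<circ> 0 = 0"
  by (rule ext) (simp add: weyl_hop_zero)

lemma weyl_zero: "(0 :: 'k::field_char_0 wop) \<in> weyl"
proof -
  have "oscal (0::'k) = 0" by (rule ext) (simp add: oscal_def)
  then show ?thesis using weyl_sc[of "0::'k"] by simp
qed

lemma weyl_plus: "a \<in> weyl \<Longrightarrow> b \<in> weyl \<Longrightarrow> a + b \<in> weyl"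
  using weyl_add oadd_eq by metis

lemma weyl_id: "(id :: 'k::field_char_0 wop) \<in> weyl"
proof -
  have "oscal (1::'k) = id" by (rule ext) (simp add: oscal_def)
  then show ?thesis using weyl_sc by metis
qed

lemma weyl_uminus: "a \<in> weyl \<Longrightarrow> (- a :: 'k::field_char_0 wop) \<in> weyl"
proof -
  assume a: "a \<in> weyl"
  have "oscal (-1::'k) \<circ> a = - a" by (rule ext) (simp add: oscal_def)
  then show ?thesis using weyl_mult[OF weyl_sc a] by metis
qed

lemma weyl_minus: "a \<in> weyl \<Longrightarrow> b \<in> weyl \<Longrightarrow> (a - b :: 'k::field_char_0 wop) \<in> weyl"
  unfolding diff_conv_add_uminus by (intro weyl_plus weyl_uminus)

lemma weyl_sum: "(\<And>i. i \<in> S \<Longrightarrow> f i \<in> weyl) \<Longrightarrow> (\<Sum>i\<in>S. f i :: 'k::field_char_0 wop) \<in> weyl"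
  by (induct S rule: infinite_finite_induct) (auto simp: weyl_zero weyl_plus)

lemma weyl_whom_decomp:
  "a \<in> weyl \<Longrightarrow> \<exists>S h. finite S \<and> (\<forall>n\<in>S. whom n (h n)) \<and> (a :: 'k::field_char_0 wop) = (\<Sum>n\<in>S. h n)"
proof -
  assume "a \<in> weyl"
  then obtain S P where S: "finite S" "\<forall>n\<in>S. good n (P n)" "a = (\<Sum>n\<in>S. hop n (P n))"
    using weyl_decomp by blast
  show ?thesis by (rule exI[of _ S], rule exI[of _ "\<lambda>n. hop n (P n)"]) (use S whom_good in auto)
qed

lemma hop_sum_eq_single:
  assumes fin: "finite S" and g: "\<forall>n\<in>S. good n (P n)" and gQ: "good d Q"
    and e: "(\<Sum>n\<in>S. hop n (P n)) = hop d Q"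
  shows "Q = (if d \<in> S then P d else 0)"
proof -
  let ?P' = "\<lambda>n. (if n \<in> S then P n else 0) - (if n = d then Q else 0)"
  have fin': "finite (insert d S)" using fin by simp
  have g': "\<And>n. n \<in> insert d S \<Longrightarrow> good n (?P' n)" using g gQ by (auto intro!: good_minus good_zero simp: good_def)
  have "(\<Sum>n\<in>insert d S. hop n (?P' n)) = (\<Sum>n\<in>insert d S. hop n (if n \<in> S then P n else 0)) - (\<Sum>n\<in>insert d S. hop n (if n = d then Q else 0))"
    by (simp add: hop_minus_poly sum_subtractf)
  also have "(\<Sum>n\<in>insert d S. hop n (if n \<in> S then P n else 0)) = (\<Sum>n\<in>S. hop n (P n))"
    using fin by (intro sum.mono_neutral_cong_right) (auto simp: hop_zero_poly)
  also have "(\<Sum>n\<in>insert d S. hop n (if n = d then Q else 0)) = hop d Q"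
    using fin by (subst sum.mono_neutral_cong_right[of "insert d S" "{d}"]) (auto simp: hop_zero_poly)
  finally have "(\<Sum>n\<in>insert d S. hop n (?P' n)) = 0" using e by (simp add: zero_fun_def)
  then have "?P' d = 0" using hop_sum_zero[OF fin' g'] by blast
  then show ?thesis by auto
qed



locale grm =
  fixes M :: "('k::field_char_0 wop, 'v) rgr"
  assumes grm: "is_grmod M"
begin

lemma zero_car: "gzero M \<in> gcar M" using grm[unfolded is_grmod_def, THEN conjunct1] by blast
lemma add_car: "u \<in> gcar M \<Longrightarrow> v \<in> gcar M \<Longrightarrow> gadd M u v \<in> gcar M" using grm[unfolded is_grmod_def, THEN conjunct2, THEN conjunct1] by blast
lemma add_assoc: "u \<in> gcar M \<Longrightarrow> v \<in> gcar M \<Longrightarrow> w \<in> gcar M \<Longrightarrow> gadd M (gadd M u v) w = gadd M u (gadd M v w)"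
  using grm[unfolded is_grmod_def, THEN conjunct2, THEN conjunct2, THEN conjunct1] by blast
lemma add_comm: "u \<in> gcar M \<Longrightarrow> v \<in> gcar M \<Longrightarrow> gadd M u v = gadd M v u" using grm[unfolded is_grmod_def, THEN conjunct2, THEN conjunct2, THEN conjunct2, THEN conjunct1] by blast
lemma zero_add: "u \<in> gcar M \<Longrightarrow> gadd M (gzero M) u = u" using grm[unfolded is_grmod_def, THEN conjunct2, THEN conjunct2, THEN conjunct2, THEN conjunct2, THEN conjunct1] by blast
lemma inv_ex: "u \<in> gcar M \<Longrightarrow> \<exists>v\<in>gcar M. gadd M u v = gzero M" using grm[unfolded is_grmod_def, THEN conjunct2, THEN conjunct2, THEN conjunct2, THEN conjunct2, THEN conjunct2, THEN conjunct1] by blast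
lemma act_car: "u \<in> gcar M \<Longrightarrow> a \<in> weyl \<Longrightarrow> gact M u a \<in> gcar M" using grm[unfolded is_grmod_def, THEN conjunct2, THEN conjunct2, THEN conjunct2, THEN conjunct2, THEN conjunct2, THEN conjunct2, THEN conjunct1] by blast
lemma act_oadd: "u \<in> gcar M \<Longrightarrow> a \<in> weyl \<Longrightarrow> b \<in> weyl \<Longrightarrow> gact M u (oadd a b) = gadd M (gact M u a) (gact M u b)"
  using grm[unfolded is_grmod_def, THEN conjunct2, THEN conjunct2, THEN conjunct2, THEN conjunct2, THEN conjunct2, THEN conjunct2, THEN conjunct2, THEN conjunct1] by blast
lemma add_act: "u \<in> gcar M \<Longrightarrow> v \<in> gcar M \<Longrightarrow> a \<in> weyl \<Longrightarrow> gact M (gadd M u v) a = gadd M (gact M u a) (gact M v a)"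
  using grm[unfolded is_grmod_def, THEN conjunct2, THEN conjunct2, THEN conjunct2, THEN conjunct2, THEN conjunct2, THEN conjunct2, THEN conjunct2, THEN conjunct2, THEN conjunct1] by blast
lemma act_comp: "u \<in> gcar M \<Longrightarrow> a \<in> weyl \<Longrightarrow> b \<in> weyl \<Longrightarrow> gact M u (a \<circ> b) = gact M (gact M u a) b"
  using grm[unfolded is_grmod_def, THEN conjunct2, THEN conjunct2, THEN conjunct2, THEN conjunct2, THEN conjunct2, THEN conjunct2, THEN conjunct2, THEN conjunct2, THEN conjunct2, THEN conjunct1] by blast
lemma act_id': "u \<in> gcar M \<Longrightarrow> gact M u (\<lambda>p. p) = u" using grm[unfolded is_grmod_def, THEN conjunct2, THEN conjunct2, THEN conjunct2, THEN conjunct2, THEN conjunct2, THEN conjunct2, THEN conjunct2, THEN conjunct2, THEN conjunct2, THEN conjunct2, THEN conjunct1] by blast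
lemma act_id: "u \<in> gcar M \<Longrightarrow> gact M u id = u" using act_id' by (simp add: id_def)
lemma deg_car: "gdeg M j \<subseteq> gcar M" using grm[unfolded is_grmod_def, THEN conjunct2, THEN conjunct2, THEN conjunct2, THEN conjunct2, THEN conjunct2, THEN conjunct2, THEN conjunct2, THEN conjunct2, THEN conjunct2, THEN conjunct2, THEN conjunct2, THEN conjunct1] by blast
lemma zero_deg: "gzero M \<in> gdeg M j" using grm[unfolded is_grmod_def, THEN conjunct2, THEN conjunct2, THEN conjunct2, THEN conjunct2, THEN conjunct2, THEN conjunct2, THEN conjunct2, THEN conjunct2, THEN conjunct2, THEN conjunct2, THEN conjunct2, THEN conjunct1] by blast
lemma add_deg: "u \<in> gdeg M j \<Longrightarrow> v \<in> gdeg M j \<Longrightarrow> gadd M u v \<in> gdeg M j" using grm[unfolded is_grmod_def, THEN conjunct2, THEN conjunct2, THEN conjunct2, THEN conjunct2, THEN conjunct2, THEN conjunct2, THEN conjunct2, THEN conjunct2, THEN conjunct2, THEN conjunct2, THEN conjunct2, THEN conjunct1] by blast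
lemma act_deg: "u \<in> gdeg M j \<Longrightarrow> whom n a \<Longrightarrow> gact M u a \<in> gdeg M (j + n)" using grm[unfolded is_grmod_def, THEN conjunct2, THEN conjunct2, THEN conjunct2, THEN conjunct2, THEN conjunct2, THEN conjunct2, THEN conjunct2, THEN conjunct2, THEN conjunct2, THEN conjunct2, THEN conjunct2, THEN conjunct2, THEN conjunct1] by blast
lemma decomp: "u \<in> gcar M \<Longrightarrow> \<exists>js f. distinct js \<and> (\<forall>j\<in>set js. f j \<in> gdeg M j) \<and> u = gsum M (map f js)"
  using grm[unfolded is_grmod_def, THEN conjunct2, THEN conjunct2, THEN conjunct2, THEN conjunct2, THEN conjunct2, THEN conjunct2, THEN conjunct2, THEN conjunct2, THEN conjunct2, THEN conjunct2, THEN conjunct2, THEN conjunct2, THEN conjunct2, THEN conjunct1] by blast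
lemma dsum: "distinct js \<Longrightarrow> (\<forall>j\<in>set js. f j \<in> gdeg M j) \<Longrightarrow> gsum M (map f js) = gzero M \<Longrightarrow> j \<in> set js \<Longrightarrow> f j = gzero M"
  using grm[unfolded is_grmod_def, THEN conjunct2, THEN conjunct2, THEN conjunct2, THEN conjunct2, THEN conjunct2, THEN conjunct2, THEN conjunct2, THEN conjunct2, THEN conjunct2, THEN conjunct2, THEN conjunct2, THEN conjunct2, THEN conjunct2, THEN conjunct2] by blast

lemma deg_car': "u \<in> gdeg M j \<Longrightarrow> u \<in> gcar M" using deg_car by blast

lemma add_zero: "u \<in> gcar M \<Longrightarrow> gadd M u (gzero M) = u"
  using add_comm zero_add zero_car by metis

lemma cancel:
  assumes u: "u \<in> gcar M" and v: "v \<in> gcar M" and e: "gadd M u v = u" shows "v = gzero M"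
proof -
  obtain w where w: "w \<in> gcar M" "gadd M u w = gzero M" using inv_ex[OF u] by blast
  have "gadd M w (gadd M u v) = gadd M w u" using e by simp
  then have "gadd M (gadd M w u) v = gadd M w u" using add_assoc u v w by simp
  moreover have "gadd M w u = gzero M" using w add_comm u by metis
  ultimately show ?thesis using zero_add v by simp
qed

lemma act_zero_op: "u \<in> gcar M \<Longrightarrow> gact M u 0 = gzero M"
proof -
  assume u: "u \<in> gcar M"
  have "oadd (0::'k wop) 0 = 0" by (simp add: oadd_eq)
  then have "gact M u 0 = gadd M (gact M u 0) (gact M u 0)" using act_oadd[OF u weyl_zero weyl_zero] by simp
  then show ?thesis using cancel act_car[OF u weyl_zero] by metis
qed

lemma zero_act: "a \<in> weyl \<Longrightarrow> gact M (gzero M) a = gzero M"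
proof -
  assume a: "a \<in> weyl"
  have "gact M (gzero M) a = gadd M (gact M (gzero M) a) (gact M (gzero M) a)"
    using add_act[OF zero_car zero_car a] zero_add[OF zero_car] by simp
  then show ?thesis using cancel act_car[OF zero_car a] by metis
qed

definition neg :: "'v \<Rightarrow> 'v" where "neg u = gact M u (oscal (-1))"

lemma neg_car: "u \<in> gcar M \<Longrightarrow> neg u \<in> gcar M" unfolding neg_def by (rule act_car) (auto intro: weyl.intros)
lemma neg_deg: "u \<in> gdeg M j \<Longrightarrow> neg u \<in> gdeg M j"
  unfolding neg_def using act_deg[of u j 0 "oscal (-1)"] whom_sc[of "-1"] by simp

lemma add_neg: "u \<in> gcar M \<Longrightarrow> gadd M u (neg u) = gzero M"
proof -
  assume u: "u \<in> gcar M"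
  have "oadd id (oscal (-1)) = (0 :: 'k wop)" by (rule ext) (simp add: oadd_def oscal_def)
  then have "gact M u (oadd id (oscal (-1))) = gzero M" using act_zero_op[OF u] by simp
  then show ?thesis using act_oadd[OF u weyl_id weyl_sc] act_id[OF u] unfolding neg_def by simp
qed

lemma inv_unique: "u \<in> gcar M \<Longrightarrow> v \<in> gcar M \<Longrightarrow> w \<in> gcar M \<Longrightarrow> gadd M u v = gzero M \<Longrightarrow> gadd M w v = gzero M \<Longrightarrow> u = w"
proof -
  assume a: "u \<in> gcar M" "v \<in> gcar M" "w \<in> gcar M" "gadd M u v = gzero M" "gadd M w v = gzero M"
  have "u = gadd M u (gadd M v w)" using a add_comm add_zero by metis
  also have "\<dots> = gadd M (gadd M u v) w" using a add_assoc by metis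
  also have "\<dots> = w" using a zero_add by metis
  finally show ?thesis .
qed

lemma gsum_Cons: "gsum M (x # xs) = gadd M x (gsum M xs)" by (simp add: gsum_def)
lemma gsum_Nil: "gsum M [] = gzero M" by (simp add: gsum_def)

lemma gsum_car: "(\<forall>x\<in>set xs. x \<in> gcar M) \<Longrightarrow> gsum M xs \<in> gcar M"
  by (induct xs) (auto simp: gsum_Cons gsum_Nil zero_car add_car)

lemma gsum_zeros: "(\<forall>x\<in>set xs. x = gzero M) \<Longrightarrow> gsum M xs = gzero M"
  by (induct xs) (auto simp: gsum_Cons gsum_Nil zero_add zero_car)

lemma gsum_update:
  assumes "distinct js" "i \<in> set js" "\<forall>j\<in>set js. f j \<in> gcar M" "v \<in> gcar M"
  shows "gsum M (map (f(i := gadd M (f i) v)) js) = gadd M (gsum M (map f js)) v"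
  using assms
proof (induct js)
  case Nil then show ?case by simp
next
  case (Cons j js)
  have G: "gsum M (map f js) \<in> gcar M" using Cons by (auto intro!: gsum_car)
  show ?case
  proof (cases "j = i")
    case True
    then have m: "map (f(i := gadd M (f i) v)) js = map f js" using Cons(2) by (auto intro!: map_cong)
    have fi: "f i \<in> gcar M" using Cons True by auto
    have "gadd M (gadd M (f i) v) (gsum M (map f js)) = gadd M (f i) (gadd M v (gsum M (map f js)))"
      using add_assoc[OF fi Cons(5) G] .
    also have "\<dots> = gadd M (f i) (gadd M (gsum M (map f js)) v)" using add_comm[OF Cons(5) G] by simp
    also have "\<dots> = gadd M (gadd M (f i) (gsum M (map f js))) v" using add_assoc[OF fi G Cons(5)] by simp
    finally have r: "gadd M (gadd M (f i) v) (gsum M (map f js)) = gadd M (gadd M (f i) (gsum M (map f js))) v" .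
    show ?thesis unfolding list.map gsum_Cons m using True r by simp
  next
    case False
    then have "gsum M (map (f(i := gadd M (f i) v)) js) = gadd M (gsum M (map f js)) v"
      using Cons by (auto simp: fun_upd_def)
    then show ?thesis using False Cons G by (simp add: gsum_Cons add_assoc)
  qed
qed

lemma unique_decomp:
  assumes u: "u \<in> gdeg M i" and d: "distinct js" and f: "\<forall>j\<in>set js. f j \<in> gdeg M j"
    and e: "u = gsum M (map f js)"
  shows "\<forall>j\<in>set js. f j = (if j = i then u else gzero M)" and "i \<notin> set js \<Longrightarrow> u = gzero M"
proof -
  have uc: "u \<in> gcar M" using u deg_car by blast
  have fc: "\<forall>j\<in>set js. f j \<in> gcar M" using f deg_car by blast
  define v where "v = neg u"
  have vd: "v \<in> gdeg M i" unfolding v_def by (rule neg_deg[OF u])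
  have vc: "v \<in> gcar M" using vd deg_car by blast
  have uv: "gadd M u v = gzero M" unfolding v_def by (rule add_neg[OF uc])
  have "(\<forall>j\<in>set js. f j = (if j = i then u else gzero M)) \<and> (i \<notin> set js \<longrightarrow> u = gzero M)"
  proof (cases "i \<in> set js")
    case True
    let ?f = "f(i := gadd M (f i) v)"
    have "gsum M (map ?f js) = gzero M" using gsum_update[OF d True fc vc] e uv by simp
    moreover have "\<forall>j\<in>set js. ?f j \<in> gdeg M j" using f vd True by (auto intro: add_deg)
    ultimately have z: "\<forall>j\<in>set js. ?f j = gzero M" using dsum[OF d] by blast
    have "f i = u"
    proof -
      have "gadd M (f i) v = gzero M" using z True by auto
      then show ?thesis using inv_unique[of "f i" v u] fc True uc vc uv by blast
    qed
    then show ?thesis using z True by auto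
  next
    case False
    let ?f = "f(i := v)"
    have m: "map ?f js = map f js" using False by (auto intro!: map_cong)
    have "gsum M (map ?f (i # js)) = gadd M v u" unfolding list.map gsum_Cons m e by simp
    also have "\<dots> = gzero M" using uv add_comm uc vc by metis
    finally have "gsum M (map ?f (i # js)) = gzero M" .
    moreover have "distinct (i # js)" using d False by simp
    moreover have "\<forall>j\<in>set (i # js). ?f j \<in> gdeg M j" using f vd by auto
    ultimately have z: "\<forall>j\<in>set (i # js). ?f j = gzero M" using dsum by blast
    then have "v = gzero M" by simp
    then have "u = gzero M" using uv add_zero uc by simp
    then show ?thesis using z False by auto
  qed
  then show "\<forall>j\<in>set js. f j = (if j = i then u else gzero M)" and "i \<notin> set js \<Longrightarrow> u = gzero M" by auto
qed

lemma act_sum_list: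
  assumes u: "u \<in> gcar M" and h: "\<forall>n\<in>set ns. h n \<in> weyl"
  shows "gact M u (sum_list (map h ns)) = gsum M (map (\<lambda>n. gact M u (h n)) ns)"
  using h
proof (induct ns)
  case Nil then show ?case by (simp only: list.map sum_list.Nil gsum_Nil act_zero_op[OF u])
next
  case (Cons n ns)
  have "sum_list (map h ns) \<in> weyl" using Cons(2)
    by (simp add: sum_list_distinct_conv_sum_set[symmetric]) (induct ns, auto simp: weyl_zero weyl_plus)
  then have s: "sum_list (map h ns) \<in> weyl" .
  have hn: "h n \<in> weyl" using Cons(2) by simp
  have "gact M u (sum_list (map h (n # ns))) = gact M u (oadd (h n) (sum_list (map h ns)))"
    by (simp only: list.map sum_list.Cons oadd_eq)
  also have "\<dots> = gadd M (gact M u (h n)) (gact M u (sum_list (map h ns)))" by (rule act_oadd[OF u hn s])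
  also have "\<dots> = gadd M (gact M u (h n)) (gsum M (map (\<lambda>n. gact M u (h n)) ns))" using Cons by simp
  finally show ?case by (simp only: list.map gsum_Cons)
qed

lemma act_whom_decomp:
  assumes u: "u \<in> gdeg M d" and b: "b \<in> weyl"
  shows "\<exists>ns h. distinct ns \<and> (\<forall>n\<in>set ns. whom n (h n)) \<and> b = sum_list (map h ns) \<and>
     gact M u b = gsum M (map (\<lambda>j. gact M u (h (j - d))) (map (\<lambda>n. d + n) ns))"
proof -
  obtain S h where S: "finite S" "\<forall>n\<in>S. whom n (h n)" "b = (\<Sum>n\<in>S. h n)" using weyl_whom_decomp[OF b] by blast
  define ns where "ns = sorted_list_of_set S"
  have ns: "distinct ns" "set ns = S" using S(1) unfolding ns_def by auto
  have bs: "b = sum_list (map h ns)" using S(3) ns by (simp add: sum_list_distinct_conv_sum_set)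
  have "gact M u b = gsum M (map (\<lambda>n. gact M u (h n)) ns)"
    using act_sum_list[of u ns h] bs ns S(2) u deg_car whom_weyl by blast
  also have "\<dots> = gsum M (map (\<lambda>j. gact M u (h (j - d))) (map (\<lambda>n. d + n) ns))" by (simp add: o_def)
  finally show ?thesis using ns S bs by blast
qed

lemma cyclic_gsub:
  assumes e: "e \<in> gdeg M d"
  shows "is_gsub M {gact M e b | b. b \<in> weyl}"
  unfolding is_gsub_def
proof (intro conjI ballI)
  have ec: "e \<in> gcar M" using e deg_car by blast
  let ?N = "{gact M e b | b. b \<in> weyl}"
  show "?N \<subseteq> gcar M" using act_car[OF ec] by blast
  have "gzero M = gact M e 0" using act_zero_op[OF ec] by simp
  then show "gzero M \<in> ?N" using weyl_zero by blast
  fix u assume "u \<in> ?N"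
  then obtain b where b: "b \<in> weyl" "u = gact M e b" by blast
  { fix v assume "v \<in> ?N"
    then obtain b' where b': "b' \<in> weyl" "v = gact M e b'" by blast
    have "gadd M u v = gact M e (oadd b b')" using b b' act_oadd[OF ec b(1) b'(1)] by simp
    then show "gadd M u v \<in> ?N" using weyl_add[OF b(1) b'(1)] by blast }
  { fix a assume a: "a \<in> (weyl :: 'k wop set)"
    have "gact M u a = gact M e (b \<circ> a)" using b act_comp[OF ec b(1) a] by simp
    then show "gact M u a \<in> ?N" using weyl_mult[OF b(1) a] by blast }
  obtain ns h where H: "distinct ns" "\<forall>n\<in>set ns. whom n (h n)" "b = sum_list (map h ns)"
     "gact M e b = gsum M (map (\<lambda>j. gact M e (h (j - d))) (map (\<lambda>n. d + n) ns))"
    using act_whom_decomp[OF e b(1)] by blast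
  show "\<exists>js f. distinct js \<and> (\<forall>j\<in>set js. f j \<in> gdeg M j \<inter> ?N) \<and> u = gsum M (map f js)"
  proof (intro exI conjI)
    show "distinct (map (\<lambda>n. d + n) ns)" using H(1) by (simp add: distinct_map inj_on_def)
    show "\<forall>j\<in>set (map (\<lambda>n. d + n) ns). gact M e (h (j - d)) \<in> gdeg M j \<inter> ?N"
      using H(2) act_deg[OF e] whom_weyl by fastforce
    show "u = gsum M (map (\<lambda>j. gact M e (h (j - d))) (map (\<lambda>n. d + n) ns))" using H(4) b by simp
  qed
qed

lemma gsub_nonzero_hom:
  assumes N: "is_gsub M N" and u: "u \<in> N" "u \<noteq> gzero M"
  shows "\<exists>j v. v \<in> gdeg M j \<and> v \<in> N \<and> v \<noteq> gzero M"
proof -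
  obtain js f where f: "distinct js" "\<forall>j\<in>set js. f j \<in> gdeg M j \<inter> N" "u = gsum M (map f js)"
    using N u unfolding is_gsub_def by blast
  show ?thesis
  proof (rule ccontr)
    assume "\<not> ?thesis"
    then have "\<forall>x\<in>set (map f js). x = gzero M" using f(2) by auto
    then show False using gsum_zeros f(3) u(2) by simp
  qed
qed

lemma car_gsub: "is_gsub M (gcar M)"
  unfolding is_gsub_def
proof (intro conjI ballI)
  fix u assume u: "u \<in> gcar M"
  then obtain js f where "distinct js" "\<forall>j\<in>set js. f j \<in> gdeg M j" "u = gsum M (map f js)"
    using decomp by blast
  then show "\<exists>js f. distinct js \<and> (\<forall>j\<in>set js. f j \<in> gdeg M j \<inter> gcar M) \<and> u = gsum M (map f js)"
    using deg_car by blast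
qed (auto simp: zero_car add_car act_car)

lemma simple_cyclic:
  assumes s: "is_simple M" and e: "e \<in> gdeg M d" "e \<noteq> gzero M"
  shows "{gact M e b | b. b \<in> weyl} = gcar M"
proof -
  have "gact M e id = e" using act_id deg_car' e by blast
  then have "e \<in> {gact M e b | b. b \<in> weyl}" using weyl_id by force
  moreover have "{gact M e b | b. b \<in> weyl} = {gzero M} \<or> {gact M e b | b. b \<in> weyl} = gcar M"
    using s[unfolded is_simple_def, THEN conjunct2, rule_format, OF cyclic_gsub[OF e(1)]] .
  ultimately show ?thesis using e(2) by blast
qed

lemma simple_hom_ex:
  assumes s: "is_simple M" shows "\<exists>d e. e \<in> gdeg M d \<and> e \<noteq> gzero M"
proof -
  obtain u where "u \<in> gcar M" "u \<noteq> gzero M" using s zero_car unfolding is_simple_def by blast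
  then obtain j v where "v \<in> gdeg M j" "v \<in> gcar M" "v \<noteq> gzero M" using gsub_nonzero_hom[OF car_gsub] by blast
  then show ?thesis by blast
qed

end



lemma hop_sums_eq:
  assumes fS: "finite S" and fT: "finite T" and gS: "\<forall>n\<in>S. good n (P n)" and gT: "\<forall>n\<in>T. good n (R n)"
    and e: "(\<Sum>n\<in>S. hop n (P n)) = (\<Sum>n\<in>T. hop n (R n))" and n: "n \<in> S"
  shows "P n = (if n \<in> T then R n else 0)"
proof -
  let ?P' = "\<lambda>n. (if n \<in> S then P n else 0) - (if n \<in> T then R n else 0)"
  have fin': "finite (S \<union> T)" using fS fT by simp
  have g': "\<And>n. n \<in> S \<union> T \<Longrightarrow> good n (?P' n)" using gS gT by (auto intro!: good_minus good_zero simp: good_def)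
  have "(\<Sum>n\<in>S \<union> T. hop n (?P' n)) = (\<Sum>n\<in>S \<union> T. hop n (if n \<in> S then P n else 0)) - (\<Sum>n\<in>S \<union> T. hop n (if n \<in> T then R n else 0))"
    by (simp add: hop_minus_poly sum_subtractf)
  also have "(\<Sum>n\<in>S \<union> T. hop n (if n \<in> S then P n else 0)) = (\<Sum>n\<in>S. hop n (P n))"
    using fS fT by (intro sum.mono_neutral_cong_right) (auto simp: hop_zero_poly)
  also have "(\<Sum>n\<in>S \<union> T. hop n (if n \<in> T then R n else 0)) = (\<Sum>n\<in>T. hop n (R n))"
    using fS fT by (intro sum.mono_neutral_cong_right) (auto simp: hop_zero_poly)
  finally have "(\<Sum>n\<in>S \<union> T. hop n (?P' n)) = 0" using e by (simp add: zero_fun_def)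
  then have "?P' n = 0" using hop_sum_zero[OF fin' g'] n by blast
  then show ?thesis using n by auto
qed

locale qm =
  fixes a :: "'k::field_char_0 wop" and e :: int and G :: "'k poly"
  assumes gG: "good e G" and aG: "a = hop e G"
begin

lemma a_weyl: "a \<in> weyl" using weyl_good[OF gG] aG by simp
lemma a_whom: "whom e a" using whom_good[OF gG] aG by simp

lemma a_comp_hop: "good n R \<Longrightarrow> a \<circ> hop n R = hop (e + n) (R * (G \<circ>\<^sub>p [:- of_int n, 1:]))"
  unfolding aG by (rule hop_comp)

lemma a_comp_sum:
  assumes fT: "finite T" and gT: "\<forall>n\<in>T. good n (R n)"
  shows "a \<circ> (\<Sum>n\<in>T. hop n (R n)) = (\<Sum>m\<in>(\<lambda>n. e + n) ` T. hop m (R (m - e) * (G \<circ>\<^sub>p [:- of_int (m - e), 1:])))"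
proof -
  have "a \<circ> (\<Sum>n\<in>T. hop n (R n)) = (\<Sum>n\<in>T. a \<circ> hop n (R n))" unfolding aG by (rule hop_comp_sum)
  also have "\<dots> = (\<Sum>n\<in>T. hop (e + n) (R n * (G \<circ>\<^sub>p [:- of_int n, 1:])))"
    by (rule sum.cong[OF refl], rule a_comp_hop) (use gT in auto)
  also have "\<dots> = (\<Sum>m\<in>(\<lambda>n. e + n) ` T. hop m (R (m - e) * (G \<circ>\<^sub>p [:- of_int (m - e), 1:])))"
    by (subst sum.reindex) (auto simp: inj_on_def)
  finally show ?thesis .
qed

lemma ideal_iff:
  assumes gQ: "good d Q"
  shows "(\<exists>c\<in>weyl. hop d Q = a \<circ> c) \<longleftrightarrow> (\<exists>R. good (d - e) R \<and> (\<forall>x. poly Q x = poly R x * poly G (x - of_int (d - e))))"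
proof
  assume "\<exists>c\<in>weyl. hop d Q = a \<circ> c"
  then obtain c where c: "c \<in> weyl" "hop d Q = a \<circ> c" by blast
  obtain T R where T: "finite T" "\<forall>n\<in>T. good n (R n)" "c = (\<Sum>n\<in>T. hop n (R n))"
    using weyl_decomp[OF c(1)] by blast
  have eq: "(\<Sum>m\<in>(\<lambda>n. e + n) ` T. hop m (R (m - e) * (G \<circ>\<^sub>p [:- of_int (m - e), 1:]))) = hop d Q"
    unfolding c(2) T(3) by (rule a_comp_sum[OF T(1,2), symmetric])
  have gd: "\<forall>m\<in>(\<lambda>n. e + n) ` T. good m (R (m - e) * (G \<circ>\<^sub>p [:- of_int (m - e), 1:]))"
  proof
    fix m assume "m \<in> (\<lambda>n. e + n) ` T"
    then have "m - e \<in> T" by auto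
    then have "good (e + (m - e)) (R (m - e) * (G \<circ>\<^sub>p [:- of_int (m - e), 1:]))"
      using T(2) good_comp[OF gG] by blast
    then show "good m (R (m - e) * (G \<circ>\<^sub>p [:- of_int (m - e), 1:]))" by simp
  qed
  have fi: "finite ((\<lambda>n. e + n) ` T)" using T(1) by simp
  have Qe: "Q = (if d \<in> (\<lambda>n. e + n) ` T then R (d - e) * (G \<circ>\<^sub>p [:- of_int (d - e), 1:]) else 0)"
    by (rule hop_sum_eq_single[OF fi gd gQ eq])
  show "\<exists>R. good (d - e) R \<and> (\<forall>x. poly Q x = poly R x * poly G (x - of_int (d - e)))"
  proof (cases "d \<in> (\<lambda>n. e + n) ` T")
    case True
    then have "d - e \<in> T" by auto
    have "\<forall>x. poly Q x = poly (R (d - e)) x * poly G (x - of_int (d - e))"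
      using Qe True by (simp add: poly_pcompose algebra_simps)
    then show ?thesis using \<open>d - e \<in> T\<close> T(2) by blast
  next
    case False
    then show ?thesis using Qe by (intro exI[of _ 0]) (simp add: good_zero)
  qed
next
  assume "\<exists>R. good (d - e) R \<and> (\<forall>x. poly Q x = poly R x * poly G (x - of_int (d - e)))"
  then obtain R where R: "good (d - e) R" "\<forall>x. poly Q x = poly R x * poly G (x - of_int (d - e))" by blast
  have "a \<circ> hop (d - e) R = hop (e + (d - e)) (R * (G \<circ>\<^sub>p [:- of_int (d - e), 1:]))" by (rule a_comp_hop[OF R(1)])
  also have "\<dots> = hop d Q" by (rule hop_cong) (simp_all add: R(2) poly_pcompose algebra_simps)
  finally have "hop d Q = a \<circ> hop (d - e) R" by simp
  then show "\<exists>c\<in>weyl. hop d Q = a \<circ> c" using weyl_good[OF R(1)] by blast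
qed

lemma wc_mem: "b \<in> weyl \<Longrightarrow> b \<in> wcoset a b"
  unfolding wcoset_def using weyl_comp_zero[OF a_weyl] weyl_zero by (force simp: oadd_eq)

lemma wc_eq_iff:
  assumes b: "b \<in> weyl" and b': "b' \<in> weyl"
  shows "wcoset a b = wcoset a b' \<longleftrightarrow> (\<exists>c\<in>weyl. b' = b + (a \<circ> c))"
proof
  assume "wcoset a b = wcoset a b'"
  then have "b' \<in> wcoset a b" using wc_mem[OF b'] by simp
  then show "\<exists>c\<in>weyl. b' = b + (a \<circ> c)" unfolding wcoset_def by (auto simp: oadd_eq)
next
  assume "\<exists>c\<in>weyl. b' = b + (a \<circ> c)"
  then obtain c where c: "c \<in> weyl" "b' = b + (a \<circ> c)" by blast
  show "wcoset a b = wcoset a b'"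
  proof (rule set_eqI)
    fix x
    show "x \<in> wcoset a b \<longleftrightarrow> x \<in> wcoset a b'"
    proof
      assume "x \<in> wcoset a b"
      then obtain c' where c': "c' \<in> weyl" "x = b + (a \<circ> c')" unfolding wcoset_def by (auto simp: oadd_eq)
      have "x = b' + (a \<circ> (c' - c))" using c c' weyl_comp_minus[OF a_weyl, of c' c] by (simp add: algebra_simps)
      then show "x \<in> wcoset a b'" unfolding wcoset_def using weyl_minus[OF c'(1) c(1)] by (auto simp: oadd_eq)
    next
      assume "x \<in> wcoset a b'"
      then obtain c' where c': "c' \<in> weyl" "x = b' + (a \<circ> c')" unfolding wcoset_def by (auto simp: oadd_eq)
      have "x = b + (a \<circ> (c + c'))" using c c' weyl_comp_add[OF a_weyl, of c c'] by (simp add: algebra_simps)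
      then show "x \<in> wcoset a b" unfolding wcoset_def using weyl_plus[OF c(1) c'(1)] by (auto simp: oadd_eq)
    qed
  qed
qed

lemma wc_sub: "b \<in> weyl \<Longrightarrow> wcoset a b \<subseteq> weyl"
  unfolding wcoset_def using weyl_add weyl_mult a_weyl by blast

lemma wc_rep: assumes b: "b \<in> weyl"
  shows "\<exists>c\<in>weyl. (SOME x. x \<in> wcoset a b) = b + (a \<circ> c)"
proof -
  have "(SOME x. x \<in> wcoset a b) \<in> wcoset a b" using someI[of "\<lambda>x. x \<in> wcoset a b" b] wc_mem[OF b] by blast
  then show ?thesis unfolding wcoset_def by (auto simp: oadd_eq)
qed

lemma wc_some: assumes b: "b \<in> weyl"
  shows "(SOME x. x \<in> wcoset a b) \<in> weyl" "wcoset a (SOME x. x \<in> wcoset a b) = wcoset a b"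
proof -
  obtain c where c: "c \<in> weyl" "(SOME x. x \<in> wcoset a b) = b + (a \<circ> c)" using wc_rep[OF b] by blast
  show s: "(SOME x. x \<in> wcoset a b) \<in> weyl" unfolding c(2) by (intro weyl_plus b weyl_mult[OF a_weyl c(1)])
  have "wcoset a b = wcoset a (SOME x. x \<in> wcoset a b)" using wc_eq_iff[OF b s] c by blast
  then show "wcoset a (SOME x. x \<in> wcoset a b) = wcoset a b" by simp
qed

lemma wc_diff: "b \<in> weyl \<Longrightarrow> b' \<in> weyl \<Longrightarrow> wcoset a b = wcoset a b' \<longleftrightarrow> wcoset a (b - b') = wcoset a 0"
proof -
  assume b: "b \<in> weyl" and b': "b' \<in> weyl"
  have d: "b - b' \<in> weyl" using weyl_minus[OF b b'] .
  have "wcoset a b = wcoset a b' \<longleftrightarrow> (\<exists>c\<in>weyl. b' = b + (a \<circ> c))" by (rule wc_eq_iff[OF b b'])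
  also have "\<dots> \<longleftrightarrow> (\<exists>c\<in>weyl. 0 = (b - b') + (a \<circ> c))"
    by (intro bex_cong refl) (auto simp: algebra_simps)
  also have "\<dots> \<longleftrightarrow> wcoset a (b - b') = wcoset a 0" using wc_eq_iff[OF d weyl_zero] by simp
  finally show ?thesis .
qed

abbreviation "Q \<equiv> qmod a"

lemma qadd: "b \<in> weyl \<Longrightarrow> b' \<in> weyl \<Longrightarrow> gadd Q (wcoset a b) (wcoset a b') = wcoset a (b + b')"
proof -
  assume b: "b \<in> weyl" and b': "b' \<in> weyl"
  let ?s = "SOME x. x \<in> wcoset a b" and ?s' = "SOME x. x \<in> wcoset a b'"
  obtain c where c: "c \<in> weyl" "?s = b + (a \<circ> c)" using wc_rep[OF b] by blast
  obtain c' where c': "c' \<in> weyl" "?s' = b' + (a \<circ> c')" using wc_rep[OF b'] by blast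
  have "?s + ?s' = (b + b') + (a \<circ> (c + c'))" using c c' weyl_comp_add[OF a_weyl, of c c'] by (simp add: algebra_simps)
  then have "\<exists>c\<in>weyl. ?s + ?s' = (b + b') + (a \<circ> c)" using weyl_plus[OF c(1) c'(1)] by blast
  then have "wcoset a (b + b') = wcoset a (?s + ?s')"
    using wc_eq_iff[OF weyl_plus[OF b b'] weyl_plus[OF wc_some(1)[OF b] wc_some(1)[OF b']]] by blast
  then show ?thesis by (simp add: qmod_def oadd_eq)
qed

lemma qact: "b \<in> weyl \<Longrightarrow> r \<in> weyl \<Longrightarrow> gact Q (wcoset a b) r = wcoset a (b \<circ> r)"
proof -
  assume b: "b \<in> weyl" and r: "r \<in> weyl"
  let ?s = "SOME x. x \<in> wcoset a b"
  obtain c where c: "c \<in> weyl" "?s = b + (a \<circ> c)" using wc_rep[OF b] by blast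
  have "?s \<circ> r = (b \<circ> r) + (a \<circ> (c \<circ> r))" using c by (auto simp: fun_eq_iff)
  then have "\<exists>c\<in>weyl. ?s \<circ> r = (b \<circ> r) + (a \<circ> c)" using weyl_mult[OF c(1) r] by blast
  then have "wcoset a (b \<circ> r) = wcoset a (?s \<circ> r)"
    using wc_eq_iff[OF weyl_mult[OF b r] weyl_mult[OF wc_some(1)[OF b] r]] by blast
  then show ?thesis by (simp add: qmod_def)
qed

lemma qzero: "gzero Q = wcoset a 0"
proof -
  have "gzero Q = wcoset a ozero" by (simp add: qmod_def)
  then show ?thesis by (simp only: ozero_eq)
qed
lemma qcar: "gcar Q = {wcoset a b | b. b \<in> weyl}" by (simp add: qmod_def)
lemma qdeg: "gdeg Q j = {wcoset a b | b. whom j b}" by (simp add: qmod_def)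

lemma qgsum: "(\<forall>j\<in>set js. h j \<in> weyl) \<Longrightarrow> gsum Q (map (\<lambda>j. wcoset a (h j)) js) = wcoset a (sum_list (map h js))"
proof (induct js)
  case Nil
  have "gsum Q [] = gzero Q" by (simp add: gsum_def)
  then show ?case by (simp only: list.map sum_list.Nil qzero)
next
  case (Cons j js)
  have s: "sum_list (map h js) \<in> weyl" using Cons(2)
    by (simp add: sum_list_distinct_conv_sum_set[symmetric]) (induct js, auto simp: weyl_zero weyl_plus)
  have "gsum Q (map (\<lambda>j. wcoset a (h j)) (j # js)) = gadd Q (wcoset a (h j)) (gsum Q (map (\<lambda>j. wcoset a (h j)) js))"
    by (simp add: gsum_def)
  also have "\<dots> = gadd Q (wcoset a (h j)) (wcoset a (sum_list (map h js)))" using Cons by simp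
  also have "\<dots> = wcoset a (h j + sum_list (map h js))" using qadd Cons(2) s by simp
  finally show ?case by (simp only: list.map sum_list.Cons)
qed

end



context qm
begin

lemma qcar_iff: "u \<in> gcar Q \<longleftrightarrow> (\<exists>b\<in>weyl. u = wcoset a b)" by (auto simp: qcar)

lemma wc_zero_iff: "b \<in> weyl \<Longrightarrow> wcoset a b = wcoset a 0 \<longleftrightarrow> (\<exists>c\<in>weyl. b = a \<circ> c)"
  using wc_eq_iff[OF weyl_zero, of b] by auto

lemma q_dsum:
  assumes d: "distinct js" and f: "\<forall>j\<in>set js. f j \<in> gdeg Q j" and z: "gsum Q (map f js) = gzero Q"
    and j0: "j0 \<in> set js"
  shows "f j0 = gzero Q"
proof -
  define hh where "hh j = (SOME b. whom j b \<and> f j = wcoset a b)" for j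
  have hh: "whom j (hh j) \<and> f j = wcoset a (hh j)" if "j \<in> set js" for j
  proof -
    have "\<exists>b. whom j b \<and> f j = wcoset a b" using f that by (auto simp: qdeg)
    then show ?thesis unfolding hh_def by (rule someI_ex)
  qed
  define QQ where "QQ j = (SOME P. good j P \<and> hh j = hop j P)" for j
  have QQ: "good j (QQ j) \<and> hh j = hop j (QQ j)" if "j \<in> set js" for j
  proof -
    have "\<exists>P. good j P \<and> hh j = hop j P" using whom_hop[of j "hh j"] hh[OF that] by blast
    then show ?thesis unfolding QQ_def by (rule someI_ex)
  qed
  have hw: "\<forall>j\<in>set js. hh j \<in> weyl" using hh whom_weyl by blast
  have m: "map f js = map (\<lambda>j. wcoset a (hh j)) js" using hh by (auto intro!: map_cong)
  have "wcoset a (sum_list (map hh js)) = gsum Q (map (\<lambda>j. wcoset a (hh j)) js)" using qgsum[OF hw] by simp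
  also have "\<dots> = gsum Q (map f js)" by (subst m) (rule refl)
  also have "\<dots> = wcoset a 0" using z qzero by simp
  finally have "wcoset a (sum_list (map hh js)) = wcoset a 0" .
  moreover have sw: "sum_list (map hh js) \<in> weyl" using hw
    by (simp add: sum_list_distinct_conv_sum_set[OF d] weyl_sum)
  ultimately obtain c where c: "c \<in> weyl" "sum_list (map hh js) = a \<circ> c" using wc_zero_iff[OF sw] by blast
  obtain T R where T: "finite T" "\<forall>n\<in>T. good n (R n)" "c = (\<Sum>n\<in>T. hop n (R n))"
    using weyl_decomp[OF c(1)] by blast
  have "(\<Sum>j\<in>set js. hop j (QQ j)) = sum_list (map hh js)"
    using QQ by (simp add: sum_list_distinct_conv_sum_set[OF d])
  also have "\<dots> = (\<Sum>m\<in>(\<lambda>n. e + n) ` T. hop m (R (m - e) * (G \<circ>\<^sub>p [:- of_int (m - e), 1:])))"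
    unfolding c(2) T(3) by (rule a_comp_sum[OF T(1,2)])
  finally have eq: "(\<Sum>j\<in>set js. hop j (QQ j)) = (\<Sum>m\<in>(\<lambda>n. e + n) ` T. hop m (R (m - e) * (G \<circ>\<^sub>p [:- of_int (m - e), 1:])))" .
  have gd: "\<forall>m\<in>(\<lambda>n. e + n) ` T. good m (R (m - e) * (G \<circ>\<^sub>p [:- of_int (m - e), 1:]))"
  proof
    fix m assume "m \<in> (\<lambda>n. e + n) ` T"
    then have "m - e \<in> T" by auto
    then have "good (e + (m - e)) (R (m - e) * (G \<circ>\<^sub>p [:- of_int (m - e), 1:]))"
      using good_comp[OF gG T(2)[rule_format]] by blast
    then show "good m (R (m - e) * (G \<circ>\<^sub>p [:- of_int (m - e), 1:]))" by simp
  qed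
  have gq: "\<forall>j\<in>set js. good j (QQ j)" using QQ by blast
  have Qj: "QQ j0 = (if j0 \<in> (\<lambda>n. e + n) ` T then R (j0 - e) * (G \<circ>\<^sub>p [:- of_int (j0 - e), 1:]) else 0)"
    by (rule hop_sums_eq[OF _ _ gq gd eq j0]) (use T(1) in auto)
  have "\<exists>c'\<in>weyl. hh j0 = a \<circ> c'"
  proof (cases "j0 \<in> (\<lambda>n. e + n) ` T")
    case True
    then have t: "j0 - e \<in> T" by auto
    have "a \<circ> hop (j0 - e) (R (j0 - e)) = hop (e + (j0 - e)) (R (j0 - e) * (G \<circ>\<^sub>p [:- of_int (j0 - e), 1:]))"
      using T(2) t by (intro a_comp_hop) auto
    also have "\<dots> = hh j0" using QQ[OF j0] Qj True by simp
    finally show ?thesis using weyl_good[OF T(2)[rule_format, OF t]]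
      by (intro bexI[of _ "hop (j0 - e) (R (j0 - e))"]) simp_all
  next
    case False
    then have "hh j0 = 0" using QQ[OF j0] Qj by (simp add: hop_zero_poly)
    then have "hh j0 = a \<circ> 0" using weyl_comp_zero[OF a_weyl] by simp
    then show ?thesis using weyl_zero by blast
  qed
  then have "wcoset a (hh j0) = wcoset a 0" using wc_zero_iff[OF hw[rule_format, OF j0]] by blast
  then show ?thesis using hh[OF j0] qzero by simp
qed

lemma q_grmod: "is_grmod Q"
  unfolding is_grmod_def
proof (intro conjI)
  show "gzero Q \<in> gcar Q" using qzero weyl_zero qcar_iff by blast
  show "\<forall>u\<in>gcar Q. \<forall>v\<in>gcar Q. gadd Q u v \<in> gcar Q" by (auto simp: qcar qadd) (blast intro: weyl_plus)
  show "\<forall>u\<in>gcar Q. \<forall>v\<in>gcar Q. \<forall>w\<in>gcar Q. gadd Q (gadd Q u v) w = gadd Q u (gadd Q v w)"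
    by (auto simp: qcar qadd weyl_plus add.assoc)
  show "\<forall>u\<in>gcar Q. \<forall>v\<in>gcar Q. gadd Q u v = gadd Q v u"
    by (auto simp: qcar qadd add.commute)
  show "\<forall>u\<in>gcar Q. gadd Q (gzero Q) u = u"
    by (auto simp: qcar qadd qzero weyl_zero)
  show "\<forall>u\<in>gcar Q. \<exists>v\<in>gcar Q. gadd Q u v = gzero Q"
  proof
    fix u assume "u \<in> gcar Q"
    then obtain b where b: "b \<in> weyl" "u = wcoset a b" by (auto simp: qcar)
    have "gadd Q u (wcoset a (- b)) = gzero Q" using qadd[OF b(1) weyl_uminus[OF b(1)]] b(2) qzero by simp
    moreover have "wcoset a (- b) \<in> gcar Q" using weyl_uminus[OF b(1)] by (auto simp: qcar)
    ultimately show "\<exists>v\<in>gcar Q. gadd Q u v = gzero Q" by blast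
  qed
  show "\<forall>u\<in>gcar Q. \<forall>r\<in>weyl. gact Q u r \<in> gcar Q"
    by (auto simp: qcar qact weyl_mult)
  show "\<forall>u\<in>gcar Q. \<forall>r\<in>weyl. \<forall>s\<in>weyl. gact Q u (oadd r s) = gadd Q (gact Q u r) (gact Q u s)"
  proof (intro ballI)
    fix u and r s :: "'k wop" assume u: "u \<in> gcar Q" and r: "r \<in> weyl" and s: "s \<in> weyl"
    then obtain b where b: "b \<in> weyl" "u = wcoset a b" by (auto simp: qcar)
    have "gact Q u (oadd r s) = wcoset a (b \<circ> (r + s))" using b qact[OF b(1) weyl_add[OF r s]] by (simp add: oadd_eq)
    also have "\<dots> = wcoset a ((b \<circ> r) + (b \<circ> s))" by (subst weyl_comp_add[OF b(1)]) (rule refl)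
    also have "\<dots> = gadd Q (gact Q u r) (gact Q u s)"
      using qadd[OF weyl_mult[OF b(1) r] weyl_mult[OF b(1) s]] qact[OF b(1) r] qact[OF b(1) s] b(2) by simp
    finally show "gact Q u (oadd r s) = gadd Q (gact Q u r) (gact Q u s)" .
  qed
  show "\<forall>u\<in>gcar Q. \<forall>v\<in>gcar Q. \<forall>r\<in>weyl. gact Q (gadd Q u v) r = gadd Q (gact Q u r) (gact Q v r)"
  proof (intro ballI)
    fix u v and r :: "'k wop" assume u: "u \<in> gcar Q" and v: "v \<in> gcar Q" and r: "r \<in> weyl"
    obtain b where b: "b \<in> weyl" "u = wcoset a b" using u by (auto simp: qcar)
    obtain b' where b': "b' \<in> weyl" "v = wcoset a b'" using v by (auto simp: qcar)
    have "gact Q (gadd Q u v) r = wcoset a ((b + b') \<circ> r)" using b b' qadd[OF b(1) b'(1)] qact[OF weyl_plus[OF b(1) b'(1)] r] by simp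
    also have "(b + b') \<circ> r = (b \<circ> r) + (b' \<circ> r)" by (rule ext) simp
    also have "wcoset a ((b \<circ> r) + (b' \<circ> r)) = gadd Q (gact Q u r) (gact Q v r)"
      using b b' qadd[OF weyl_mult[OF b(1) r] weyl_mult[OF b'(1) r]] qact[OF b(1) r] qact[OF b'(1) r] by simp
    finally show "gact Q (gadd Q u v) r = gadd Q (gact Q u r) (gact Q v r)" .
  qed
  show "\<forall>u\<in>gcar Q. \<forall>r\<in>weyl. \<forall>s\<in>weyl. gact Q u (r \<circ> s) = gact Q (gact Q u r) s"
    by (auto simp: qcar qact weyl_mult o_assoc)
  show "\<forall>u\<in>gcar Q. gact Q u (\<lambda>p. p) = u"
  proof
    fix u assume "u \<in> gcar Q"
    then obtain b where b: "b \<in> weyl" "u = wcoset a b" by (auto simp: qcar)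
    have "(\<lambda>p. p) \<in> (weyl :: 'k wop set)" using weyl_id by (simp add: id_def)
    then show "gact Q u (\<lambda>p. p) = u" using b qact by (simp add: o_def)
  qed
  show "\<forall>j. gdeg Q j \<subseteq> gcar Q \<and> gzero Q \<in> gdeg Q j \<and> (\<forall>u\<in>gdeg Q j. \<forall>v\<in>gdeg Q j. gadd Q u v \<in> gdeg Q j)"
  proof (intro allI conjI)
    fix j
    show "gdeg Q j \<subseteq> gcar Q" using whom_weyl by (auto simp: qdeg qcar)
    show "gzero Q \<in> gdeg Q j" using whom_zero qzero by (auto simp: qdeg)
    show "\<forall>u\<in>gdeg Q j. \<forall>v\<in>gdeg Q j. gadd Q u v \<in> gdeg Q j"
    proof (intro ballI)
      fix u v assume "u \<in> gdeg Q j" "v \<in> gdeg Q j"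
      then obtain b b' where bb: "whom j b" "u = wcoset a b" "whom j b'" "v = wcoset a b'" by (auto simp: qdeg)
      then have "gadd Q u v = wcoset a (b + b')" using qadd[OF whom_weyl[OF bb(1)] whom_weyl[OF bb(3)]] by simp
      moreover have "whom j (b + b')" using whom_add[OF bb(1) bb(3)] by (simp add: oadd_eq)
      ultimately show "gadd Q u v \<in> gdeg Q j" by (auto simp: qdeg)
    qed
  qed
  show "\<forall>j n u r. u \<in> gdeg Q j \<longrightarrow> whom n r \<longrightarrow> gact Q u r \<in> gdeg Q (j + n)"
  proof (intro allI impI)
    fix j n u and r :: "'k wop" assume "u \<in> gdeg Q j" "whom n r"
    then obtain b where bb: "whom j b" "u = wcoset a b" by (auto simp: qdeg)
    have "gact Q u r = wcoset a (b \<circ> r)" using qact[OF whom_weyl[OF bb(1)] whom_weyl[OF \<open>whom n r\<close>]] bb(2) by simp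
    moreover have "whom (j + n) (b \<circ> r)" by (rule whom_mult[OF bb(1) \<open>whom n r\<close>])
    ultimately show "gact Q u r \<in> gdeg Q (j + n)" by (auto simp: qdeg)
  qed
  show "\<forall>u\<in>gcar Q. \<exists>js f. distinct js \<and> (\<forall>j\<in>set js. f j \<in> gdeg Q j) \<and> u = gsum Q (map f js)"
  proof
    fix u assume "u \<in> gcar Q"
    then obtain b where b: "b \<in> weyl" "u = wcoset a b" by (auto simp: qcar)
    obtain S h where S: "finite S" "\<forall>n\<in>S. whom n (h n)" "b = (\<Sum>n\<in>S. h n)" using weyl_whom_decomp[OF b(1)] by blast
    define ns where "ns = sorted_list_of_set S"
    have ns: "distinct ns" "set ns = S" using S(1) unfolding ns_def by auto
    have hw: "\<forall>j\<in>set ns. h j \<in> weyl" using S(2) ns whom_weyl by auto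
    have "u = wcoset a (sum_list (map h ns))" using b S(3) ns by (simp add: sum_list_distinct_conv_sum_set)
    also have "wcoset a (sum_list (map h ns)) = gsum Q (map (\<lambda>j. wcoset a (h j)) ns)" using qgsum[OF hw] by simp
    finally show "\<exists>js f. distinct js \<and> (\<forall>j\<in>set js. f j \<in> gdeg Q j) \<and> u = gsum Q (map f js)"
      using ns S(2) by (intro exI[of _ ns] exI[of _ "\<lambda>j. wcoset a (h j)"]) (auto simp: qdeg)
  qed
  show "\<forall>js f. distinct js \<longrightarrow> (\<forall>j\<in>set js. f j \<in> gdeg Q j) \<longrightarrow> gsum Q (map f js) = gzero Q \<longrightarrow> (\<forall>j\<in>set js. f j = gzero Q)"
  proof (intro allI impI ballI)
    fix js f j assume "distinct js" "\<forall>j\<in>set js. f j \<in> gdeg Q j" "gsum Q (map f js) = gzero Q" "j \<in> set js"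
    then show "f j = gzero Q" by (rule q_dsum)
  qed
qed

end



primrec ffp :: "nat \<Rightarrow> 'k::field_char_0 poly" where
  "ffp 0 = 1"
| "ffp (Suc k) = ffp k * [:- of_nat k, 1:]"

lemma ffp_root: "i < k \<Longrightarrow> poly (ffp k) (of_nat i :: 'k::field_char_0) = 0"
  by (induct k) (auto simp: less_Suc_eq)

lemma good_ffp: "good (int k) (ffp k)"
  unfolding good_def using ffp_root by auto

lemma ffp_nonzero: "(\<forall>i::nat. x \<noteq> of_nat i) \<Longrightarrow> poly (ffp k) x \<noteq> 0"
  by (induct k) auto

lemma oscal_inv: "t \<noteq> 0 \<Longrightarrow> oscal t \<circ> oscal (inverse t) = (id :: 'k::field_char_0 wop)"
  by (rule ext) (simp add: oscal_def)

lemma id_hop: "(id :: 'k::field_char_0 wop) = hop 0 1"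
proof -
  have "oscal (1::'k) = id" by (rule ext) (simp add: oscal_def)
  then show ?thesis using oscal_hop[of "1::'k"] by (simp add: one_pCons)
qed

context qm
begin

lemma q_simple:
  assumes nz: "wcoset a id \<noteq> wcoset a 0"
    and gen: "\<And>j b. whom j b \<Longrightarrow> wcoset a b \<noteq> wcoset a 0 \<Longrightarrow> \<exists>c\<in>weyl. \<exists>t. t \<noteq> 0 \<and> wcoset a (b \<circ> c) = wcoset a (oscal t)"
  shows "is_simple Q"
  unfolding is_simple_def
proof (intro conjI allI impI)
  interpret G: grm Q by unfold_locales (rule q_grmod)
  have idc: "wcoset a id \<in> gcar Q" using weyl_id by (auto simp: qcar)
  then show "gcar Q \<noteq> {gzero Q}" using nz qzero by auto
  fix N assume N: "is_gsub Q N"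
  show "N = {gzero Q} \<or> N = gcar Q"
  proof (cases "N = {gzero Q}")
    case True then show ?thesis by simp
  next
    case False
    have Nsub: "N \<subseteq> gcar Q" and Nz: "gzero Q \<in> N" and Nact: "\<forall>u\<in>N. \<forall>r\<in>weyl. gact Q u r \<in> N"
      using N unfolding is_gsub_def by blast+
    obtain u where u: "u \<in> N" "u \<noteq> gzero Q" using False Nz by blast
    obtain j v where v: "v \<in> gdeg Q j" "v \<in> N" "v \<noteq> gzero Q" using G.gsub_nonzero_hom[OF N u] by blast
    obtain b where b: "whom j b" "v = wcoset a b" using v(1) by (auto simp: qdeg)
    have bw: "b \<in> weyl" using whom_weyl[OF b(1)] .
    obtain c t where ct: "c \<in> weyl" "t \<noteq> 0" "wcoset a (b \<circ> c) = wcoset a (oscal t)"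
      using gen[OF b(1)] v(3) b(2) qzero by auto
    have "gact Q v c \<in> N" using Nact v(2) ct(1) by blast
    then have "wcoset a (oscal t) \<in> N" using qact[OF bw ct(1)] b(2) ct(3) by simp
    then have "gact Q (wcoset a (oscal t)) (oscal (inverse t)) \<in> N" using Nact weyl_sc by blast
    then have idN: "wcoset a id \<in> N" using qact[OF weyl_sc weyl_sc] oscal_inv[OF ct(2)] by simp
    have "gcar Q \<subseteq> N"
    proof
      fix w assume "w \<in> gcar Q"
      then obtain r where r: "r \<in> weyl" "w = wcoset a r" by (auto simp: qcar)
      have "gact Q (wcoset a id) r \<in> N" using Nact idN r(1) by blast
      then show "w \<in> N" using qact[OF weyl_id r(1)] r(2) by simp
    qed
    then show ?thesis using Nsub by blast
  qed
qed

lemma zt_lin: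
  assumes G: "G = [:g, 1:]" and ge: "0 \<le> e" and gQ: "good d P"
    and H: "\<forall>i::nat. int i < d - e \<longrightarrow> of_nat i \<noteq> of_int (d - e) - g"
  shows "wcoset a (hop d P) = wcoset a 0 \<longleftrightarrow> poly P (of_int (d - e) - g) = 0"
proof -
  let ?r = "of_int (d - e) - g"
  have "wcoset a (hop d P) = wcoset a 0 \<longleftrightarrow> (\<exists>c\<in>weyl. hop d P = a \<circ> c)"
    by (rule wc_zero_iff[OF weyl_good[OF gQ]])
  also have "\<dots> \<longleftrightarrow> (\<exists>R. good (d - e) R \<and> (\<forall>x. poly P x = poly R x * poly G (x - of_int (d - e))))"
    by (rule ideal_iff[OF gQ])
  also have "\<dots> \<longleftrightarrow> poly P ?r = 0"
  proof
    assume "\<exists>R. good (d - e) R \<and> (\<forall>x. poly P x = poly R x * poly G (x - of_int (d - e)))"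
    then obtain R where R: "\<forall>x. poly P x = poly R x * poly G (x - of_int (d - e))" by blast
    show "poly P ?r = 0" using R[rule_format, of ?r] G by simp
  next
    assume z: "poly P ?r = 0"
    then obtain R where R: "P = [:- ?r, 1:] * R" using poly_eq_0_iff_dvd by (metis dvdE)
    have gR: "good (d - e) R"
      unfolding good_def
    proof (intro allI impI)
      fix i :: nat assume i: "int i < d - e"
      then have "poly P (of_nat i) = 0" using gQ ge by (simp add: good_def)
      moreover have "of_nat i - ?r \<noteq> 0" using H i by simp
      moreover have "poly P (of_nat i) = (of_nat i - ?r) * poly R (of_nat i)" unfolding R by (simp add: algebra_simps)
      ultimately show "poly R (of_nat i) = 0" by simp
    qed
    have "\<forall>x. poly P x = poly R x * poly G (x - of_int (d - e))" using G R by (simp add: algebra_simps)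
    then show "\<exists>R. good (d - e) R \<and> (\<forall>x. poly P x = poly R x * poly G (x - of_int (d - e)))" using gR by blast
  qed
  finally show ?thesis .
qed

lemma zt_Y:
  assumes G: "G = 1" and ee: "e = -1" and gQ: "good d P"
  shows "wcoset a (hop d P) = wcoset a 0 \<longleftrightarrow> (0 \<le> d \<longrightarrow> poly P (of_int d) = 0)"
proof -
  have "wcoset a (hop d P) = wcoset a 0 \<longleftrightarrow> (\<exists>c\<in>weyl. hop d P = a \<circ> c)"
    by (rule wc_zero_iff[OF weyl_good[OF gQ]])
  also have "\<dots> \<longleftrightarrow> (\<exists>R. good (d - e) R \<and> (\<forall>x. poly P x = poly R x * poly G (x - of_int (d - e))))"
    by (rule ideal_iff[OF gQ])
  also have "\<dots> \<longleftrightarrow> good (d + 1) P"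
  proof
    assume "\<exists>R. good (d - e) R \<and> (\<forall>x. poly P x = poly R x * poly G (x - of_int (d - e)))"
    then obtain R where R: "good (d + 1) R" "\<forall>x. poly P x = poly R x" using G ee by auto
    then show "good (d + 1) P" by (simp add: good_def)
  next
    assume "good (d + 1) P"
    then show "\<exists>R. good (d - e) R \<and> (\<forall>x. poly P x = poly R x * poly G (x - of_int (d - e)))"
      using G ee by (intro exI[of _ P]) simp
  qed
  also have "\<dots> \<longleftrightarrow> (0 \<le> d \<longrightarrow> poly P (of_int d) = 0)"
  proof
    assume g1: "good (d + 1) P"
    show "0 \<le> d \<longrightarrow> poly P (of_int d) = 0"
    proof
      assume "0 \<le> d"
      then have "int (nat d) < d + 1" "of_nat (nat d) = (of_int d :: 'k)" by simp_all
      then show "poly P (of_int d) = 0" using g1 unfolding good_def by metis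
    qed
  next
    assume h: "0 \<le> d \<longrightarrow> poly P (of_int d) = 0"
    show "good (d + 1) P" unfolding good_def
    proof (intro allI impI)
      fix j :: nat assume j: "int j < d + 1"
      show "poly P (of_nat j) = 0"
      proof (cases "int j < d")
        case True then show ?thesis using gQ by (simp add: good_def)
      next
        case False
        then have "int j = d" using j by simp
        then show ?thesis using h by (metis of_int_of_nat_eq of_nat_0_le_iff)
      qed
    qed
  qed
  finally show ?thesis .
qed

end



context qm
begin

lemma lin_simple:
  assumes G: "G = [:g, 1:]" and ge: "0 \<le> e"
    and H: "\<forall>d. \<forall>i::nat. int i < d - e \<longrightarrow> of_nat i \<noteq> of_int (d - e) - g"
    and N0: "\<forall>i::nat. of_int (- e) - g \<noteq> of_nat i"
  shows "is_simple Q"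
proof (rule q_simple)
  have Hd: "\<And>d. \<forall>i::nat. int i < d - e \<longrightarrow> of_nat i \<noteq> of_int (d - e) - g" using H by blast
  have g01: "good 0 (1 :: 'k poly)" by (rule good_le) simp
  show "wcoset a id \<noteq> wcoset a 0"
    unfolding id_hop using zt_lin[OF G ge g01 Hd] by simp
  fix j b assume b: "whom j b" "wcoset a b \<noteq> wcoset a 0"
  obtain P where P: "good j P" "b = hop j P" using whom_hop[OF b(1)] by blast
  have nzP: "poly P (of_int (j - e) - g) \<noteq> 0" using zt_lin[OF G ge P(1) Hd] b(2) P(2) by simp
  define F where "F = (ffp (nat (- j)) :: 'k poly)"
  have gF: "good (- j) F"
  proof (cases "0 \<le> j")
    case True then show ?thesis by (intro good_le) simp
  next
    case False
    then have "- j = int (nat (- j))" by simp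
    then show ?thesis unfolding F_def using good_ffp[of "nat (- j)"] by simp
  qed
  define T where "T = F * (P \<circ>\<^sub>p [:- of_int (- j), 1:])"
  have "b \<circ> hop (- j) F = hop (j + - j) T" unfolding P(2) T_def by (rule hop_comp[OF gF])
  then have bc: "b \<circ> hop (- j) F = hop 0 T" by simp
  define r0 where "r0 = (of_int (0 - e) - g :: 'k)"
  define t where "t = poly T r0"
  have "poly F r0 \<noteq> 0" unfolding F_def r0_def using N0 by (intro ffp_nonzero) simp
  moreover have "poly P (r0 + of_int j) \<noteq> 0" using nzP unfolding r0_def by (simp add: algebra_simps)
  ultimately have t0: "t \<noteq> 0" unfolding t_def T_def by (simp add: poly_pcompose add.commute)
  have gT: "good 0 (T - [:t:])" by (rule good_le) simp
  have "wcoset a (hop 0 (T - [:t:])) = wcoset a 0"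
    using zt_lin[OF G ge gT Hd] unfolding t_def r0_def by simp
  then have "wcoset a (hop 0 T - oscal t) = wcoset a 0" by (simp add: hop_minus_poly oscal_hop)
  then have "wcoset a (hop 0 T) = wcoset a (oscal t)"
    using wc_diff[OF weyl_good[OF good_le[of 0 T]] weyl_sc] by simp
  then have "wcoset a (b \<circ> hop (- j) F) = wcoset a (oscal t)" using bc by simp
  then show "\<exists>c\<in>weyl. \<exists>t. t \<noteq> 0 \<and> wcoset a (b \<circ> c) = wcoset a (oscal t)"
    using weyl_good[OF gF] t0 by blast
qed

lemma Y_simple:
  assumes G: "G = 1" and ee: "e = -1"
  shows "is_simple Q"
proof (rule q_simple)
  have g01: "good 0 (1 :: 'k poly)" by (rule good_le) simp
  show "wcoset a id \<noteq> wcoset a 0"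
    unfolding id_hop using zt_Y[OF G ee g01] by simp
  fix j b assume b: "whom j b" "wcoset a b \<noteq> wcoset a 0"
  obtain P where P: "good j P" "b = hop j P" using whom_hop[OF b(1)] by blast
  have nzP: "0 \<le> j" "poly P (of_int j) \<noteq> 0" using zt_Y[OF G ee P(1)] b(2) P(2) by simp_all
  have gF: "good (- j) (1 :: 'k poly)" by (rule good_le) (use nzP in simp)
  define T where "T = (1 :: 'k poly) * (P \<circ>\<^sub>p [:- of_int (- j), 1:])"
  have "b \<circ> hop (- j) 1 = hop (j + - j) T" unfolding P(2) T_def by (rule hop_comp[OF gF])
  then have bc: "b \<circ> hop (- j) 1 = hop 0 T" by simp
  define t where "t = poly T 0"
  have t0: "t \<noteq> 0" using nzP unfolding t_def T_def by (simp add: poly_pcompose)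
  have gT: "good 0 (T - [:t:])" by (rule good_le) simp
  have "wcoset a (hop 0 (T - [:t:])) = wcoset a 0"
    using zt_Y[OF G ee gT] unfolding t_def by simp
  then have "wcoset a (hop 0 T - oscal t) = wcoset a 0" by (simp add: hop_minus_poly oscal_hop)
  then have "wcoset a (hop 0 T) = wcoset a (oscal t)"
    using wc_diff[OF weyl_good[OF good_le[of 0 T]] weyl_sc] by simp
  then have "wcoset a (b \<circ> hop (- j) 1) = wcoset a (oscal t)" using bc by simp
  then show "\<exists>c\<in>weyl. \<exists>t. t \<noteq> 0 \<and> wcoset a (b \<circ> c) = wcoset a (oscal t)"
    using weyl_good[OF gF] t0 by blast
qed

end

lemma qmX: "qm (wx :: 'k::field_char_0 wop) 1 [:0,1:]"
  by unfold_locales (simp_all add: wx_hop good_def)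

lemma qmY: "qm (wy :: 'k::field_char_0 wop) (-1) 1"
  by unfold_locales (simp_all add: wy_hop good_def)

lemma z_hop: "(wx \<circ> wy :: 'k::field_char_0 wop) = hop 0 [:1,1:]"
proof -
  have "(wx \<circ> wy :: 'k wop) = hop (1 + -1) (1 * ([:0,1:] \<circ>\<^sub>p [:- of_int (-1), 1:]))"
    unfolding wx_hop wy_hop by (rule hop_comp) (simp add: good_def)
  also have "\<dots> = hop 0 [:1,1:]" by (rule hop_cong) (simp_all add: poly_pcompose)
  finally show ?thesis .
qed

lemma M_hop: "oadd (wx \<circ> wy) (oscal l) = (hop 0 [:1 + l, 1:] :: 'k::field_char_0 wop)"
proof -
  have "oadd (wx \<circ> wy) (oscal l) = hop 0 [:1,1:] + hop 0 [:l:]" by (simp add: oadd_eq z_hop oscal_hop)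
  also have "\<dots> = hop 0 [:1 + l, 1:]" by (subst hop_add_poly[symmetric]) (rule hop_cong, simp_all)
  finally show ?thesis .
qed

lemma qmM: "qm (oadd (wx \<circ> wy) (oscal l) :: 'k::field_char_0 wop) 0 [:1 + l, 1:]"
  by unfold_locales (simp_all add: M_hop good_def)

lemma X_simple: "is_simple (qmod (wx :: 'k::field_char_0 wop))"
proof (rule qm.lin_simple[OF qmX, where g=0])
  show "\<forall>d. \<forall>i::nat. int i < d - 1 \<longrightarrow> of_nat i \<noteq> (of_int (d - 1) - 0 :: 'k)"
  proof (intro allI impI)
    fix d and i :: nat assume "int i < d - 1"
    then have "int i \<noteq> d - 1" by simp
    then show "of_nat i \<noteq> (of_int (d - 1) - 0 :: 'k)" by (metis diff_zero of_int_eq_iff of_int_of_nat_eq)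
  qed
  show "\<forall>i::nat. of_int (- 1) - 0 \<noteq> (of_nat i :: 'k)"
  proof
    fix i :: nat
    have "(of_int (- 1) :: 'k) \<noteq> of_int (int i)" by (subst of_int_eq_iff) simp
    then show "of_int (- 1) - 0 \<noteq> (of_nat i :: 'k)" by simp
  qed
qed simp_all

lemma Y_simple0: "is_simple (qmod (wy :: 'k::field_char_0 wop))"
  by (rule qm.Y_simple[OF qmY]) simp_all

lemma notInt_shift: "(l :: 'k::field_char_0) \<notin> \<int> \<Longrightarrow> of_int d - (1 + l) \<noteq> of_nat i"
proof
  assume l: "l \<notin> \<int>" and e: "of_int d - (1 + l) = of_nat i"
  then have "l = of_int (d - 1 - int i)" by (simp add: algebra_simps)
  then show False using l by (metis Ints_of_int)
qed

lemma M_simple: "(l :: 'k::field_char_0) \<notin> \<int> \<Longrightarrow> is_simple (Mmod l)"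
  unfolding Mmod_def
proof -
  assume l: "l \<notin> \<int>"
  show "is_simple (qmod (oadd (wx \<circ> wy) (oscal l)))"
  proof (rule qm.lin_simple[OF qmM, where g="1 + l"])
  show "\<forall>d. \<forall>i::nat. int i < d - 0 \<longrightarrow> of_nat i \<noteq> of_int (d - 0) - (1 + l)"
    using notInt_shift[OF l] by (metis diff_zero)
  show "\<forall>i::nat. of_int (- 0) - (1 + l) \<noteq> of_nat i" using notInt_shift[OF l, of 0] by simp
  qed simp_all
qed



lemma gshift_simps [simp]:
  "gcar (gshift n M) = gcar M" "gadd (gshift n M) = gadd M" "gzero (gshift n M) = gzero M"
  "gact (gshift n M) = gact M" "gdeg (gshift n M) j = gdeg M (j - n)"
  by (simp_all add: gshift_def)

lemma gsum_shift [simp]: "gsum (gshift n M) = gsum M"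
  by (rule ext) (simp add: gsum_def)

lemma gshift_gshift: "gshift n (gshift m M) = gshift (n + m) M"
  by (simp add: gshift_def algebra_simps)

lemma grmod_shift:
  assumes M: "is_grmod (M :: ('k::field_char_0 wop, 'v) rgr)" shows "is_grmod (gshift n M)"
proof -
  interpret grm M by unfold_locales (rule M)
  show ?thesis
    unfolding is_grmod_def gshift_simps gsum_shift
  proof (intro conjI allI impI ballI)
    show "gzero M \<in> gcar M" by (rule zero_car)
  next
    fix u v assume "u \<in> gcar M" "v \<in> gcar M" then show "gadd M u v \<in> gcar M" by (rule add_car)
  next
    fix u v w assume "u \<in> gcar M" "v \<in> gcar M" "w \<in> gcar M"
    then show "gadd M (gadd M u v) w = gadd M u (gadd M v w)" by (rule add_assoc)
  next
    fix u v assume "u \<in> gcar M" "v \<in> gcar M" then show "gadd M u v = gadd M v u" by (rule add_comm)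
  next
    fix u assume "u \<in> gcar M" then show "gadd M (gzero M) u = u" by (rule zero_add)
  next
    fix u assume "u \<in> gcar M" then show "\<exists>v\<in>gcar M. gadd M u v = gzero M" by (rule inv_ex)
  next
    fix u and a :: "'k wop" assume "u \<in> gcar M" "a \<in> weyl" then show "gact M u a \<in> gcar M" by (rule act_car)
  next
    fix u and a b :: "'k wop" assume "u \<in> gcar M" "a \<in> weyl" "b \<in> weyl"
    then show "gact M u (oadd a b) = gadd M (gact M u a) (gact M u b)" by (rule act_oadd)
  next
    fix u v and a :: "'k wop" assume "u \<in> gcar M" "v \<in> gcar M" "a \<in> weyl"
    then show "gact M (gadd M u v) a = gadd M (gact M u a) (gact M v a)" by (rule add_act)
  next
    fix u and a b :: "'k wop" assume "u \<in> gcar M" "a \<in> weyl" "b \<in> weyl"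
    then show "gact M u (a \<circ> b) = gact M (gact M u a) b" by (rule act_comp)
  next
    fix u assume "u \<in> gcar M" then show "gact M u (\<lambda>p. p) = u" by (rule act_id')
  next
    fix j show "gdeg M (j - n) \<subseteq> gcar M" by (rule deg_car)
  next
    fix j show "gzero M \<in> gdeg M (j - n)" by (rule zero_deg)
  next
    fix j u v assume "u \<in> gdeg M (j - n)" "v \<in> gdeg M (j - n)"
    then show "gadd M u v \<in> gdeg M (j - n)" by (rule add_deg)
  next
    fix j k u and a :: "'k wop" assume "u \<in> gdeg M (j - n)" "whom k a"
    then have "gact M u a \<in> gdeg M (j - n + k)" by (rule act_deg)
    then show "gact M u a \<in> gdeg M (j + k - n)" by (simp add: algebra_simps)
  next
    fix u assume "u \<in> gcar M"
    then obtain js f where f: "distinct js" "\<forall>j\<in>set js. f j \<in> gdeg M j" "u = gsum M (map f js)" by (metis decomp)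
    show "\<exists>js f. distinct js \<and> (\<forall>j\<in>set js. f j \<in> gdeg M (j - n)) \<and> u = gsum M (map f js)"
    proof (intro exI conjI)
      show "distinct (map (\<lambda>j. j + n) js)" using f(1) by (simp add: distinct_map inj_on_def)
      show "\<forall>j\<in>set (map (\<lambda>j. j + n) js). f (j - n) \<in> gdeg M (j - n)" using f(2) by auto
      show "u = gsum M (map (\<lambda>j. f (j - n)) (map (\<lambda>j. j + n) js))" using f(3) by (simp add: o_def)
    qed
  next
    fix js f j assume d: "distinct js" and f: "\<forall>j\<in>set js. f j \<in> gdeg M (j - n)"
      and z: "gsum M (map f js) = gzero M" and j: "j \<in> set js"
    have "distinct (map (\<lambda>j. j - n) js)" using d by (simp add: distinct_map inj_on_def)
    moreover have "\<forall>i\<in>set (map (\<lambda>j. j - n) js). f (i + n) \<in> gdeg M i" using f by auto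
    moreover have "gsum M (map (\<lambda>i. f (i + n)) (map (\<lambda>j. j - n) js)) = gzero M" using z by (simp add: o_def)
    moreover have "j - n \<in> set (map (\<lambda>j. j - n) js)" using j by simp
    ultimately have "f (j - n + n) = gzero M" by (rule dsum)
    then show "f j = gzero M" by simp
  qed
qed

lemma simple_shift:
  assumes M: "is_grmod (M :: ('k::field_char_0 wop, 'v) rgr)" and s: "is_simple M" shows "is_simple (gshift n M)"
  unfolding is_simple_def gshift_simps
proof (intro conjI allI impI)
  show "gcar M \<noteq> {gzero M}" using s unfolding is_simple_def by blast
  fix N assume N: "is_gsub (gshift n M) N"
  have "is_gsub M N"
    unfolding is_gsub_def
  proof (intro conjI ballI)
    show "N \<subseteq> gcar M" "gzero M \<in> N" using N unfolding is_gsub_def by auto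
    fix u assume u: "u \<in> N"
    { fix v assume "v \<in> N" then show "gadd M u v \<in> N" using N u unfolding is_gsub_def by auto }
    { fix a :: "'k wop" assume "a \<in> weyl" then show "gact M u a \<in> N" using N u unfolding is_gsub_def by auto }
    obtain js f where f: "distinct js" "\<forall>j\<in>set js. f j \<in> gdeg M (j - n) \<inter> N" "u = gsum M (map f js)"
      using N u unfolding is_gsub_def by auto
    show "\<exists>js f. distinct js \<and> (\<forall>j\<in>set js. f j \<in> gdeg M j \<inter> N) \<and> u = gsum M (map f js)"
    proof (intro exI conjI)
      show "distinct (map (\<lambda>j. j - n) js)" using f(1) by (simp add: distinct_map inj_on_def)
      show "\<forall>j\<in>set (map (\<lambda>j. j - n) js). f (j + n) \<in> gdeg M j \<inter> N" using f(2) by auto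
      show "u = gsum M (map (\<lambda>j. f (j + n)) (map (\<lambda>j. j - n) js))" using f(3) by (simp add: o_def)
    qed
  qed
  then show "N = {gzero M} \<or> N = gcar M" using s unfolding is_simple_def by blast
qed

lemma ghom_zero:
  fixes M :: "('k::field_char_0 wop, 'v) rgr" and N :: "('k wop, 'w) rgr"
  assumes M: "is_grmod M" and N: "is_grmod N" and f: "is_ghom M N f"
  shows "f (gzero M) = gzero N"
proof -
  interpret M: grm M by unfold_locales (rule M)
  interpret N: grm N by unfold_locales (rule N)
  have z: "f (gzero M) \<in> gcar N" using f M.zero_car unfolding is_ghom_def by blast
  have "f (gzero M) = f (gadd M (gzero M) (gzero M))" using M.zero_add[OF M.zero_car] by simp
  also have "\<dots> = gadd N (f (gzero M)) (f (gzero M))" using f M.zero_car unfolding is_ghom_def by blast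
  finally show ?thesis using N.cancel[OF z z] by simp
qed

lemma gen_image:
  fixes M :: "('k::field_char_0 wop, 'v) rgr" and N :: "('k wop, 'w) rgr"
  assumes M: "is_grmod M" and N: "is_grmod N" and f: "is_ghom M N f" and b: "bij_betw f (gcar M) (gcar N)"
    and u: "u \<in> gdeg M j" "u \<noteq> gzero M" and r: "r \<in> weyl" and k: "gact M u r = gzero M"
  shows "f u \<in> gdeg N j" "f u \<noteq> gzero N" "gact N (f u) r = gzero N"
proof -
  interpret M: grm M by unfold_locales (rule M)
  have uc: "u \<in> gcar M" using u(1) M.deg_car by blast
  show "f u \<in> gdeg N j" using f u(1) unfolding is_ghom_def by blast
  have "f u \<noteq> f (gzero M)" using b uc M.zero_car u(2) unfolding bij_betw_def inj_on_def by blast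
  then show "f u \<noteq> gzero N" using ghom_zero[OF M N f] by simp
  have "gact N (f u) r = f (gact M u r)" using f uc r unfolding is_ghom_def by metis
  then show "gact N (f u) r = gzero N" using k ghom_zero[OF M N f] by simp
qed

context qm
begin

lemma hom_form: "v \<in> gdeg Q d \<Longrightarrow> r \<in> weyl \<Longrightarrow>
  \<exists>P. good d P \<and> v = wcoset a (hop d P) \<and> gact Q v r = wcoset a (hop d P \<circ> r)"
proof -
  assume v: "v \<in> gdeg Q d" and r: "r \<in> weyl"
  obtain b where b: "whom d b" "v = wcoset a b" using v by (auto simp: qdeg)
  obtain P where P: "good d P" "b = hop d P" using whom_hop[OF b(1)] by blast
  show ?thesis using P b qact[OF whom_weyl[OF b(1)] r] by blast
qed

lemma gen_props: "wcoset a id \<in> gdeg Q 0" "gact Q (wcoset a id) a = gzero Q"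
proof -
  have "whom 0 (id :: 'k wop)" using whom_sc[of 1] by (metis id_hop oscal_hop one_pCons)
  then show "wcoset a id \<in> gdeg Q 0" by (auto simp: qdeg)
  have "gact Q (wcoset a id) a = wcoset a (id \<circ> a)" by (rule qact[OF weyl_id a_weyl])
  also have "\<dots> = wcoset a 0"
  proof -
    have "a = a \<circ> id" by simp
    then have "\<exists>c\<in>weyl. a = a \<circ> c" using weyl_id by blast
    then show ?thesis using wc_zero_iff[OF a_weyl] by simp
  qed
  finally show "gact Q (wcoset a id) a = gzero Q" using qzero by simp
qed

end



lemma X_zero: "good d P \<Longrightarrow> wcoset wx (hop d P) = wcoset wx (0 :: 'k::field_char_0 wop) \<longleftrightarrow> poly P (of_int d - 1) = 0"
proof -
  assume g: "good d P"
  have H: "\<forall>i::nat. int i < d - 1 \<longrightarrow> of_nat i \<noteq> (of_int (d - 1) - 0 :: 'k)"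
  proof (intro allI impI)
    fix i :: nat assume "int i < d - 1"
    then have "int i \<noteq> d - 1" by simp
    then show "of_nat i \<noteq> (of_int (d - 1) - 0 :: 'k)" by (metis diff_zero of_int_eq_iff of_int_of_nat_eq)
  qed
  show ?thesis using qm.zt_lin[OF qmX, where g=0, OF _ _ g H] by simp
qed

lemma Y_zero: "good d P \<Longrightarrow> wcoset wy (hop d P) = wcoset wy (0 :: 'k::field_char_0 wop) \<longleftrightarrow> (0 \<le> d \<longrightarrow> poly P (of_int d) = 0)"
  using qm.zt_Y[OF qmY] by simp

lemma M_zero: "(l :: 'k::field_char_0) \<notin> \<int> \<Longrightarrow> good d P \<Longrightarrow>
   wcoset (oadd (wx \<circ> wy) (oscal l)) (hop d P) = wcoset (oadd (wx \<circ> wy) (oscal l)) 0 \<longleftrightarrow> poly P (of_int d - (1 + l)) = 0"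
proof -
  assume l: "l \<notin> \<int>" and g: "good d P"
  have H: "\<forall>i::nat. int i < d - 0 \<longrightarrow> of_nat i \<noteq> of_int (d - 0) - (1 + l)"
    using notInt_shift[OF l] by (metis diff_zero)
  show ?thesis using qm.zt_lin[OF qmM, where g="1 + l", OF _ _ g H] by simp
qed

lemma comp_x: "good d P \<Longrightarrow> hop d P \<circ> wx = hop (d + 1) ([:0,1:] * (P \<circ>\<^sub>p [:- 1, 1:]))"
  unfolding wx_hop using hop_comp[of 1 "[:0,1:]" d P] by (simp add: good_def)

lemma comp_y: "good d P \<Longrightarrow> hop d P \<circ> wy = hop (d - 1) (1 * (P \<circ>\<^sub>p [:1, 1:]))"
  unfolding wy_hop using hop_comp[of "-1" 1 d P] by (simp add: good_def)

lemma comp_z: "good d P \<Longrightarrow> hop d P \<circ> oadd (wx \<circ> wy) (oscal l) = hop d ([:1 + l,1:] * (P \<circ>\<^sub>p [:0, 1:]))"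
  unfolding M_hop using hop_comp[of 0 "[:1 + l,1:]" d P] by (simp add: good_def)

lemma good_x: "good d P \<Longrightarrow> good (d + 1) ([:0,1:] * (P \<circ>\<^sub>p [:- 1, 1:]))"
  using good_comp[of d P 1 "[:0,1:]"] by (simp add: good_def add.commute)
lemma good_y: "good d P \<Longrightarrow> good (d - 1) (1 * (P \<circ>\<^sub>p [:1, 1:]))"
  using good_comp[of d P "-1" 1] by (simp add: good_def)
lemma good_z: "good d P \<Longrightarrow> good d ([:1 + l,1:] * (P \<circ>\<^sub>p [:0, 1:]))"
  using good_comp[of d P 0 "[:1 + l,1:]"] by (simp add: good_def)

lemma wx_weyl: "wx \<in> weyl" by (rule weyl_x)
lemma wy_weyl: "wy \<in> weyl" by (rule weyl_y)
lemma wz_weyl: "oadd (wx \<circ> wy) (oscal l) \<in> weyl" by (intro weyl_add weyl_mult weyl_x weyl_y weyl_sc)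

lemma of_int_nz: "d \<noteq> 0 \<Longrightarrow> (of_int d :: 'k::field_char_0) \<noteq> 0" by simp

lemma notInt_add: "(l :: 'k::field_char_0) \<notin> \<int> \<Longrightarrow> of_int d + l \<noteq> 0"
proof
  assume l: "l \<notin> \<int>" and e: "of_int d + l = 0"
  then have "l = of_int (- d)" by (simp add: eq_neg_iff_add_eq_0 add.commute)
  then show False using l by (metis Ints_of_int)
qed

lemma X_kill_x:
  assumes v: "v \<in> gdeg (qmod wx) d" "v \<noteq> gzero (qmod (wx :: 'k::field_char_0 wop))" "gact (qmod wx) v wx = gzero (qmod wx)"
  shows "d = 0"
proof -
  obtain P where P: "good d P" "v = wcoset wx (hop d P)" "gact (qmod wx) v wx = wcoset wx (hop d P \<circ> wx)"
    using qm.hom_form[OF qmX v(1) wx_weyl] by blast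
  have nz: "poly P (of_int d - 1) \<noteq> 0" using v(2) P(2) X_zero[OF P(1)] by (simp add: qm.qzero[OF qmX])
  have "wcoset wx (hop (d + 1) ([:0,1:] * (P \<circ>\<^sub>p [:- 1, 1:]))) = wcoset wx 0"
    using v(3) P(3) comp_x[OF P(1)] by (simp add: qm.qzero[OF qmX])
  then have "poly ([:0,1:] * (P \<circ>\<^sub>p [:- 1, 1:])) (of_int (d + 1) - 1) = (0::'k)" using X_zero[OF good_x[OF P(1)]] by simp
  then have "(of_int d :: 'k) * poly P (of_int d - 1) = 0" by (simp add: poly_pcompose)
  then show "d = 0" using nz by simp
qed

lemma X_kill_y:
  assumes v: "v \<in> gdeg (qmod wx) d" "v \<noteq> gzero (qmod (wx :: 'k::field_char_0 wop))"
  shows "gact (qmod wx) v wy \<noteq> gzero (qmod wx)"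
proof
  assume k: "gact (qmod wx) v wy = gzero (qmod wx)"
  obtain P where P: "good d P" "v = wcoset wx (hop d P)" "gact (qmod wx) v wy = wcoset wx (hop d P \<circ> wy)"
    using qm.hom_form[OF qmX v(1) wy_weyl] by blast
  have nz: "poly P (of_int d - 1) \<noteq> 0" using v(2) P(2) X_zero[OF P(1)] by (simp add: qm.qzero[OF qmX])
  have "wcoset wx (hop (d - 1) (1 * (P \<circ>\<^sub>p [:1, 1:]))) = wcoset wx 0"
    using k P(3) comp_y[OF P(1)] by (simp add: qm.qzero[OF qmX])
  then have "poly (1 * (P \<circ>\<^sub>p [:1, 1:])) (of_int (d - 1) - 1) = (0::'k)" using X_zero[OF good_y[OF P(1)]] by simp
  then show False using nz by (simp add: poly_pcompose algebra_simps)
qed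

lemma X_kill_z:
  assumes l: "l \<notin> \<int>" and v: "v \<in> gdeg (qmod wx) d" "v \<noteq> gzero (qmod (wx :: 'k::field_char_0 wop))"
  shows "gact (qmod wx) v (oadd (wx \<circ> wy) (oscal l)) \<noteq> gzero (qmod wx)"
proof
  assume k: "gact (qmod wx) v (oadd (wx \<circ> wy) (oscal l)) = gzero (qmod wx)"
  obtain P where P: "good d P" "v = wcoset wx (hop d P)" "gact (qmod wx) v (oadd (wx \<circ> wy) (oscal l)) = wcoset wx (hop d P \<circ> oadd (wx \<circ> wy) (oscal l))"
    using qm.hom_form[OF qmX v(1) wz_weyl] by blast
  have nz: "poly P (of_int d - 1) \<noteq> 0" using v(2) P(2) X_zero[OF P(1)] by (simp add: qm.qzero[OF qmX])
  have "wcoset wx (hop d ([:1 + l,1:] * (P \<circ>\<^sub>p [:0, 1:]))) = wcoset wx 0"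
    using k P(3) comp_z[OF P(1)] by (simp add: qm.qzero[OF qmX])
  then have "poly ([:1 + l,1:] * (P \<circ>\<^sub>p [:0, 1:])) (of_int d - 1) = (0::'k)" using X_zero[OF good_z[OF P(1)]] by simp
  then have "(of_int d + l) * poly P (of_int d - 1) = 0" by (simp add: poly_pcompose algebra_simps)
  then show False using nz notInt_add[OF l] by simp
qed

lemma Y_kill_y:
  assumes v: "v \<in> gdeg (qmod wy) d" "v \<noteq> gzero (qmod (wy :: 'k::field_char_0 wop))" "gact (qmod wy) v wy = gzero (qmod wy)"
  shows "d = 0"
proof -
  obtain P where P: "good d P" "v = wcoset wy (hop d P)" "gact (qmod wy) v wy = wcoset wy (hop d P \<circ> wy)"
    using qm.hom_form[OF qmY v(1) wy_weyl] by blast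
  have nz: "0 \<le> d" "poly P (of_int d) \<noteq> 0" using v(2) P(2) Y_zero[OF P(1)] by (simp_all add: qm.qzero[OF qmY])
  have "wcoset wy (hop (d - 1) (1 * (P \<circ>\<^sub>p [:1, 1:]))) = wcoset wy 0"
    using v(3) P(3) comp_y[OF P(1)] by (simp add: qm.qzero[OF qmY])
  then have "0 \<le> d - 1 \<longrightarrow> poly (1 * (P \<circ>\<^sub>p [:1, 1:])) (of_int (d - 1)) = (0::'k)" using Y_zero[OF good_y[OF P(1)]] by simp
  then have "\<not> 0 \<le> d - 1" using nz by (simp add: poly_pcompose)
  then show "d = 0" using nz by simp
qed

lemma Y_kill_x:
  assumes v: "v \<in> gdeg (qmod wy) d" "v \<noteq> gzero (qmod (wy :: 'k::field_char_0 wop))"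
  shows "gact (qmod wy) v wx \<noteq> gzero (qmod wy)"
proof
  assume k: "gact (qmod wy) v wx = gzero (qmod wy)"
  obtain P where P: "good d P" "v = wcoset wy (hop d P)" "gact (qmod wy) v wx = wcoset wy (hop d P \<circ> wx)"
    using qm.hom_form[OF qmY v(1) wx_weyl] by blast
  have nz: "0 \<le> d" "poly P (of_int d) \<noteq> 0" using v(2) P(2) Y_zero[OF P(1)] by (simp_all add: qm.qzero[OF qmY])
  have "wcoset wy (hop (d + 1) ([:0,1:] * (P \<circ>\<^sub>p [:- 1, 1:]))) = wcoset wy 0"
    using k P(3) comp_x[OF P(1)] by (simp add: qm.qzero[OF qmY])
  then have "0 \<le> d + 1 \<longrightarrow> poly ([:0,1:] * (P \<circ>\<^sub>p [:- 1, 1:])) (of_int (d + 1)) = (0::'k)" using Y_zero[OF good_x[OF P(1)]] by simp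
  then have "(of_int (d + 1) :: 'k) * poly P (of_int d) = 0" using nz by (simp add: poly_pcompose)
  then have "(of_int (d + 1) :: 'k) = 0" using nz(2) by simp
  then have "d + 1 = 0" by (simp only: of_int_eq_0_iff)
  then show False using nz(1) by simp
qed

lemma Y_kill_z:
  assumes l: "l \<notin> \<int>" and v: "v \<in> gdeg (qmod wy) d" "v \<noteq> gzero (qmod (wy :: 'k::field_char_0 wop))"
  shows "gact (qmod wy) v (oadd (wx \<circ> wy) (oscal l)) \<noteq> gzero (qmod wy)"
proof
  assume k: "gact (qmod wy) v (oadd (wx \<circ> wy) (oscal l)) = gzero (qmod wy)"
  obtain P where P: "good d P" "v = wcoset wy (hop d P)" "gact (qmod wy) v (oadd (wx \<circ> wy) (oscal l)) = wcoset wy (hop d P \<circ> oadd (wx \<circ> wy) (oscal l))"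
    using qm.hom_form[OF qmY v(1) wz_weyl] by blast
  have nz: "0 \<le> d" "poly P (of_int d) \<noteq> 0" using v(2) P(2) Y_zero[OF P(1)] by (simp_all add: qm.qzero[OF qmY])
  have "wcoset wy (hop d ([:1 + l,1:] * (P \<circ>\<^sub>p [:0, 1:]))) = wcoset wy 0"
    using k P(3) comp_z[OF P(1)] by (simp add: qm.qzero[OF qmY])
  then have "0 \<le> d \<longrightarrow> poly ([:1 + l,1:] * (P \<circ>\<^sub>p [:0, 1:])) (of_int d) = (0::'k)" using Y_zero[OF good_z[OF P(1)]] by simp
  then have "(of_int (d + 1) + l) * poly P (of_int d) = 0" using nz by (simp add: poly_pcompose algebra_simps)
  moreover have "(of_int (d + 1) + l :: 'k) \<noteq> 0" by (rule notInt_add[OF l])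
  ultimately show False using nz by simp
qed

lemma M_kill_x:
  assumes l: "l \<notin> \<int>" and v: "v \<in> gdeg (Mmod l) d" "v \<noteq> gzero (Mmod (l :: 'k::field_char_0))"
  shows "gact (Mmod l) v wx \<noteq> gzero (Mmod l)"
proof
  let ?a = "oadd (wx \<circ> wy) (oscal l) :: 'k wop"
  assume k: "gact (Mmod l) v wx = gzero (Mmod l)"
  obtain P where P: "good d P" "v = wcoset ?a (hop d P)" "gact (qmod ?a) v wx = wcoset ?a (hop d P \<circ> wx)"
    using qm.hom_form[OF qmM v(1)[unfolded Mmod_def] wx_weyl] by blast
  have nz: "poly P (of_int d - (1 + l)) \<noteq> 0" using v(2) P(2) M_zero[OF l P(1)] by (simp add: Mmod_def qm.qzero[OF qmM])
  have "wcoset ?a (hop (d + 1) ([:0,1:] * (P \<circ>\<^sub>p [:- 1, 1:]))) = wcoset ?a 0"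
    using k P(3) comp_x[OF P(1)] by (simp add: Mmod_def qm.qzero[OF qmM])
  then have "poly ([:0,1:] * (P \<circ>\<^sub>p [:- 1, 1:])) (of_int (d + 1) - (1 + l)) = 0" using M_zero[OF l good_x[OF P(1)]] by simp
  then have "(of_int d + (- l)) * poly P (of_int d - (1 + l)) = 0" by (simp add: poly_pcompose algebra_simps)
  moreover have "- l \<notin> \<int>" using l by (metis Ints_minus minus_minus)
  ultimately show False using nz notInt_add[of "- l" d] by simp
qed

lemma M_kill_y:
  assumes l: "l \<notin> \<int>" and v: "v \<in> gdeg (Mmod l) d" "v \<noteq> gzero (Mmod (l :: 'k::field_char_0))"
  shows "gact (Mmod l) v wy \<noteq> gzero (Mmod l)"
proof
  let ?a = "oadd (wx \<circ> wy) (oscal l) :: 'k wop"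
  assume k: "gact (Mmod l) v wy = gzero (Mmod l)"
  obtain P where P: "good d P" "v = wcoset ?a (hop d P)" "gact (qmod ?a) v wy = wcoset ?a (hop d P \<circ> wy)"
    using qm.hom_form[OF qmM v(1)[unfolded Mmod_def] wy_weyl] by blast
  have nz: "poly P (of_int d - (1 + l)) \<noteq> 0" using v(2) P(2) M_zero[OF l P(1)] by (simp add: Mmod_def qm.qzero[OF qmM])
  have "wcoset ?a (hop (d - 1) (1 * (P \<circ>\<^sub>p [:1, 1:]))) = wcoset ?a 0"
    using k P(3) comp_y[OF P(1)] by (simp add: Mmod_def qm.qzero[OF qmM])
  then have "poly (1 * (P \<circ>\<^sub>p [:1, 1:])) (of_int (d - 1) - (1 + l)) = 0" using M_zero[OF l good_y[OF P(1)]] by simp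
  then show False using nz by (simp add: poly_pcompose algebra_simps)
qed

lemma M_kill_z:
  assumes l: "l \<notin> \<int>" and l': "l' \<notin> \<int>" and v: "v \<in> gdeg (Mmod l) 0" "v \<noteq> gzero (Mmod (l :: 'k::field_char_0))"
    and k: "gact (Mmod l) v (oadd (wx \<circ> wy) (oscal l')) = gzero (Mmod l)"
  shows "l = l'"
proof -
  let ?a = "oadd (wx \<circ> wy) (oscal l) :: 'k wop"
  obtain P where P: "good 0 P" "v = wcoset ?a (hop 0 P)" "gact (qmod ?a) v (oadd (wx \<circ> wy) (oscal l')) = wcoset ?a (hop 0 P \<circ> oadd (wx \<circ> wy) (oscal l'))"
    using qm.hom_form[OF qmM v(1)[unfolded Mmod_def] wz_weyl] by blast
  have nz: "poly P (- (1 + l)) \<noteq> 0" using v(2) P(2) M_zero[OF l P(1)] by (simp add: Mmod_def qm.qzero[OF qmM])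
  have "wcoset ?a (hop 0 ([:1 + l',1:] * (P \<circ>\<^sub>p [:0, 1:]))) = wcoset ?a 0"
    using k P(3) comp_z[OF P(1)] by (simp add: Mmod_def qm.qzero[OF qmM])
  then have "poly ([:1 + l',1:] * (P \<circ>\<^sub>p [:0, 1:])) (of_int 0 - (1 + l)) = 0" using M_zero[OF l good_z[OF P(1)]] by simp
  then have "(l' - l) * poly P (- (1 + l)) = 0" by (simp add: poly_pcompose algebra_simps)
  then show "l = l'" using nz by simp
qed



lemma oadd_minus: "oadd x (- y) = (x - y :: 'k::field_char_0 wop)"
  by (rule ext) (simp add: oadd_def)

context qm
begin

lemma iso_from_gen:
  fixes M :: "('k wop, 'v) rgr"
  assumes Mg: "is_grmod M" and sM: "is_simple M" and u0: "u0 \<in> gdeg M s" "u0 \<noteq> gzero M"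
    and ka: "gact M u0 a = gzero M" and sQ: "is_simple Q"
  shows "g_iso M (gshift s Q)"
proof -
  interpret MM: grm M by unfold_locales (rule Mg)
  interpret QQ: grm Q by unfold_locales (rule q_grmod)
  have u0c: "u0 \<in> gcar M" using u0(1) MM.deg_car by blast
  have wd: "gact M u0 b = gact M u0 b'" if b: "b \<in> weyl" "b' \<in> weyl" "wcoset a b = wcoset a b'" for b b'
  proof -
    obtain c where c: "c \<in> weyl" "b' = b + (a \<circ> c)" using wc_eq_iff[OF b(1,2)] b(3) by blast
    have ac: "a \<circ> c \<in> weyl" using weyl_mult[OF a_weyl c(1)] .
    have "gact M u0 b' = gact M u0 (oadd b (a \<circ> c))" using c(2) by (simp add: oadd_eq)
    also have "\<dots> = gadd M (gact M u0 b) (gact M u0 (a \<circ> c))" by (rule MM.act_oadd[OF u0c b(1) ac])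
    also have "gact M u0 (a \<circ> c) = gact M (gact M u0 a) c" by (rule MM.act_comp[OF u0c a_weyl c(1)])
    also have "\<dots> = gzero M" using ka MM.zero_act[OF c(1)] by simp
    also have "gadd M (gact M u0 b) (gzero M) = gact M u0 b" by (rule MM.add_zero[OF MM.act_car[OF u0c b(1)]])
    finally show ?thesis by simp
  qed
  define K where "K = {wcoset a b | b. b \<in> weyl \<and> gact M u0 b = gzero M}"
  have Kchar: "wcoset a b \<in> K \<longleftrightarrow> gact M u0 b = gzero M" if b: "b \<in> weyl" for b
  proof
    assume "wcoset a b \<in> K"
    then obtain b' where b': "b' \<in> weyl" "gact M u0 b' = gzero M" "wcoset a b = wcoset a b'" unfolding K_def by blast
    then show "gact M u0 b = gzero M" using wd[OF b b'(1) b'(3)] by simp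
  next
    assume "gact M u0 b = gzero M" then show "wcoset a b \<in> K" unfolding K_def using b by blast
  qed
  have Kg: "is_gsub Q K"
    unfolding is_gsub_def
  proof (intro conjI ballI)
    show "K \<subseteq> gcar Q" unfolding K_def by (auto simp: qcar)
    show "gzero Q \<in> K" unfolding qzero using Kchar[OF weyl_zero] MM.act_zero_op[OF u0c] by simp
    fix C assume C: "C \<in> K"
    then obtain b where b: "b \<in> weyl" "gact M u0 b = gzero M" "C = wcoset a b" unfolding K_def by blast
    { fix D assume "D \<in> K"
      then obtain b' where b': "b' \<in> weyl" "gact M u0 b' = gzero M" "D = wcoset a b'" unfolding K_def by blast
      have "gact M u0 (oadd b b') = gzero M"
        using MM.act_oadd[OF u0c b(1) b'(1)] b(2) b'(2) MM.zero_add[OF MM.zero_car] by simp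
      then have "wcoset a (b + b') \<in> K" using Kchar[OF weyl_plus[OF b(1) b'(1)]] by (simp add: oadd_eq)
      then show "gadd Q C D \<in> K" using qadd[OF b(1) b'(1)] b(3) b'(3) by simp }
    { fix r :: "'k wop" assume r: "r \<in> weyl"
      have "gact M u0 (b \<circ> r) = gzero M" using MM.act_comp[OF u0c b(1) r] b(2) MM.zero_act[OF r] by simp
      then have "wcoset a (b \<circ> r) \<in> K" using Kchar[OF weyl_mult[OF b(1) r]] by simp
      then show "gact Q C r \<in> K" using qact[OF b(1) r] b(3) by simp }
    obtain ns h where H: "distinct ns" "\<forall>n\<in>set ns. whom n (h n)" "b = sum_list (map h ns)"
       "gact M u0 b = gsum M (map (\<lambda>j. gact M u0 (h (j - s))) (map (\<lambda>n. s + n) ns))"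
      using MM.act_whom_decomp[OF u0(1) b(1)] by blast
    have dj: "distinct (map (\<lambda>n. s + n) ns)" using H(1) by (simp add: distinct_map inj_on_def)
    have Fd: "\<forall>j\<in>set (map (\<lambda>n. s + n) ns). gact M u0 (h (j - s)) \<in> gdeg M j"
    proof
      fix j assume "j \<in> set (map (\<lambda>n. s + n) ns)"
      then have "j - s \<in> set ns" by auto
      then have "gact M u0 (h (j - s)) \<in> gdeg M (s + (j - s))" using MM.act_deg[OF u0(1)] H(2) by blast
      then show "gact M u0 (h (j - s)) \<in> gdeg M j" by simp
    qed
    have hz: "gact M u0 (h n) = gzero M" if n: "n \<in> set ns" for n
    proof -
      have "s + n \<in> set (map (\<lambda>n. s + n) ns)" using n by simp
      then have "gact M u0 (h (s + n - s)) = gzero M"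
        using MM.dsum[OF dj Fd] H(4) b(2) by (metis (no_types, lifting))
      then show ?thesis by simp
    qed
    have hw: "\<forall>n\<in>set ns. h n \<in> weyl" using H(2) whom_weyl by blast
    show "\<exists>js f. distinct js \<and> (\<forall>j\<in>set js. f j \<in> gdeg Q j \<inter> K) \<and> C = gsum Q (map f js)"
    proof (intro exI conjI)
      show "distinct ns" by (rule H(1))
      show "\<forall>j\<in>set ns. wcoset a (h j) \<in> gdeg Q j \<inter> K"
        using H(2) hz Kchar hw by (auto simp: qdeg)
      show "C = gsum Q (map (\<lambda>j. wcoset a (h j)) ns)" using qgsum[OF hw] b(3) H(3) by simp
    qed
  qed
  have idQ: "wcoset a id \<in> gcar Q" using weyl_id by (auto simp: qcar)
  have "wcoset a id \<notin> K" using Kchar[OF weyl_id] MM.act_id[OF u0c] u0(2) by simp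
  moreover have "K = {gzero Q} \<or> K = gcar Q"
    by (rule sQ[unfolded is_simple_def, THEN conjunct2, rule_format, OF Kg])
  ultimately have "K = {gzero Q}" using idQ by blast
  then have kernel: "wcoset a b = wcoset a 0" if "b \<in> weyl" "gact M u0 b = gzero M" for b
    using Kchar that qzero by auto
  define g where "g u = wcoset a (SOME b. b \<in> weyl \<and> u = gact M u0 b)" for u
  have gkey: "g (gact M u0 b) = wcoset a b" if b: "b \<in> weyl" for b
  proof -
    let ?b = "SOME b'. b' \<in> weyl \<and> gact M u0 b = gact M u0 b'"
    have sb: "?b \<in> weyl \<and> gact M u0 b = gact M u0 ?b" using someI[of "\<lambda>b'. b' \<in> weyl \<and> gact M u0 b = gact M u0 b'" b] b by blast
    have nb: "- b \<in> weyl" using weyl_uminus[OF b] .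
    have "gact M u0 (oadd ?b (- b)) = gadd M (gact M u0 ?b) (gact M u0 (- b))" by (rule MM.act_oadd[OF u0c _ nb]) (use sb in blast)
    also have "\<dots> = gadd M (gact M u0 b) (gact M u0 (- b))" using sb by simp
    also have "\<dots> = gact M u0 (oadd b (- b))" by (rule MM.act_oadd[OF u0c b nb, symmetric])
    also have "oadd b (- b) = 0" by (simp add: oadd_eq)
    also have "gact M u0 0 = gzero M" by (rule MM.act_zero_op[OF u0c])
    finally have "gact M u0 (?b - b) = gzero M" by (simp only: oadd_minus)
    have sbw: "?b \<in> weyl" using sb by blast
    have "wcoset a (?b - b) = wcoset a 0" by (rule kernel[OF weyl_minus[OF sbw b]]) fact
    then have "wcoset a ?b = wcoset a b" using wc_diff[OF sbw b] by simp
    then show ?thesis unfolding g_def by simp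
  qed
  have carM: "gcar M = {gact M u0 b | b. b \<in> weyl}" using MM.simple_cyclic[OF sM u0] by simp
  have hom: "is_ghom M (gshift s Q) g"
    unfolding is_ghom_def gshift_simps
  proof (intro conjI ballI allI)
    fix u assume "u \<in> gcar M"
    then obtain b where b: "b \<in> weyl" "u = gact M u0 b" using carM by blast
    then show "g u \<in> gcar Q" using gkey by (auto simp: qcar)
  next
    fix u v assume "u \<in> gcar M" "v \<in> gcar M"
    then obtain b b' where b: "b \<in> weyl" "u = gact M u0 b" and b': "b' \<in> weyl" "v = gact M u0 b'" using carM by blast
    have "gadd M u v = gact M u0 (b + b')" using MM.act_oadd[OF u0c b(1) b'(1)] b b' by (simp add: oadd_eq)
    then have "g (gadd M u v) = wcoset a (b + b')" using gkey weyl_plus[OF b(1) b'(1)] by simp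
    then show "g (gadd M u v) = gadd Q (g u) (g v)" using qadd[OF b(1) b'(1)] gkey b b' by simp
  next
    fix u and r :: "'k wop" assume "u \<in> gcar M" "r \<in> weyl"
    then obtain b where b: "b \<in> weyl" "u = gact M u0 b" and r: "r \<in> weyl" using carM by blast
    have "gact M u r = gact M u0 (b \<circ> r)" using MM.act_comp[OF u0c b(1) r] b by simp
    then have "g (gact M u r) = wcoset a (b \<circ> r)" using gkey weyl_mult[OF b(1) r] by simp
    then show "g (gact M u r) = gact Q (g u) r" using qact[OF b(1) r] gkey b by simp
  next
    fix j u assume uj: "u \<in> gdeg M j"
    then have "u \<in> gcar M" using MM.deg_car by blast
    then obtain b where b: "b \<in> weyl" "u = gact M u0 b" using carM by blast
    obtain ns h where H: "distinct ns" "\<forall>n\<in>set ns. whom n (h n)" "b = sum_list (map h ns)"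
       "gact M u0 b = gsum M (map (\<lambda>j. gact M u0 (h (j - s))) (map (\<lambda>n. s + n) ns))"
      using MM.act_whom_decomp[OF u0(1) b(1)] by blast
    have dj: "distinct (map (\<lambda>n. s + n) ns)" using H(1) by (simp add: distinct_map inj_on_def)
    have Fd: "\<forall>i\<in>set (map (\<lambda>n. s + n) ns). gact M u0 (h (i - s)) \<in> gdeg M i"
    proof
      fix i assume "i \<in> set (map (\<lambda>n. s + n) ns)"
      then have "i - s \<in> set ns" by auto
      then have "gact M u0 (h (i - s)) \<in> gdeg M (s + (i - s))" using MM.act_deg[OF u0(1)] H(2) by blast
      then show "gact M u0 (h (i - s)) \<in> gdeg M i" by simp
    qed
    have ud: "u = gsum M (map (\<lambda>i. gact M u0 (h (i - s))) (map (\<lambda>n. s + n) ns))" using H(4) b(2) by simp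
    note UD = MM.unique_decomp[OF uj dj Fd ud]
    show "g u \<in> gdeg Q (j - s)"
    proof (cases "j \<in> set (map (\<lambda>n. s + n) ns)")
      case True
      then have js: "j - s \<in> set ns" by auto
      have "gact M u0 (h (j - s)) = (if j = j then u else gzero M)"
        by (rule UD(1)[rule_format, OF True])
      then have "gact M u0 (h (j - s)) = u" by simp
      then have "g u = wcoset a (h (j - s))" using gkey[OF whom_weyl[OF H(2)[rule_format, OF js]]] by simp
      then show ?thesis using H(2) js by (auto simp: qdeg)
    next
      case False
      then have "u = gzero M" using UD(2) by blast
      then have "u = gact M u0 0" using MM.act_zero_op[OF u0c] by simp
      then have "g u = wcoset a 0" using gkey[OF weyl_zero] by simp
      then show ?thesis using whom_zero by (auto simp: qdeg)
    qed
  qed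
  have bij: "bij_betw g (gcar M) (gcar (gshift s Q))"
    unfolding bij_betw_def gshift_simps
  proof
    show "inj_on g (gcar M)"
    proof
      fix u v assume "u \<in> gcar M" "v \<in> gcar M" and e: "g u = g v"
      then obtain b b' where b: "b \<in> weyl" "u = gact M u0 b" and b': "b' \<in> weyl" "v = gact M u0 b'" using carM by blast
      have "wcoset a b = wcoset a b'" using e gkey b b' by simp
      then show "u = v" using wd[OF b(1) b'(1)] b(2) b'(2) by simp
    qed
    show "g ` gcar M = gcar Q"
    proof
      have "\<forall>u\<in>gcar M. g u \<in> gcar (gshift s Q)" using hom[unfolded is_ghom_def, THEN conjunct1] .
      then show "g ` gcar M \<subseteq> gcar Q" by auto
      show "gcar Q \<subseteq> g ` gcar M"
      proof
        fix C assume "C \<in> gcar Q"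
        then obtain b where b: "b \<in> weyl" "C = wcoset a b" by (auto simp: qcar)
        then have "C = g (gact M u0 b)" using gkey by simp
        moreover have "gact M u0 b \<in> gcar M" using MM.act_car[OF u0c b(1)] .
        ultimately show "C \<in> g ` gcar M" by blast
      qed
    qed
  qed
  show ?thesis unfolding g_iso_def using hom bij by blast
qed

end



lemma good0: "good 0 P" by (rule good_le) simp
lemma weyl_hop0: "hop 0 P \<in> weyl" by (rule weyl_good[OF good0])

lemma gshift_0: "gshift 0 M = M" by (simp add: gshift_def)

lemma hop0_oscal: "hop 0 [:c:] = oscal c" by (simp add: oscal_hop)

lemma xstep_op: "(wx :: 'k::field_char_0 wop) \<circ> hop 0 [:- (s + 1), 1:] = hop 0 [:- s, 1:] \<circ> wx"
proof -
  have "(wx :: 'k wop) \<circ> hop 0 [:- (s + 1), 1:] = hop (1 + 0) ([:- (s + 1), 1:] * ([:0,1:] \<circ>\<^sub>p [:- of_int 0, 1:]))"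
    unfolding wx_hop by (rule hop_comp[OF good0])
  also have "\<dots> = hop (0 + 1) ([:0,1:] * ([:- s, 1:] \<circ>\<^sub>p [:- of_int 1, 1:]))"
    by (rule hop_cong) (simp_all add: poly_pcompose algebra_simps)
  also have "\<dots> = hop 0 [:- s, 1:] \<circ> wx" unfolding wx_hop by (rule hop_comp[symmetric]) (simp add: good_def)
  finally show ?thesis .
qed

lemma ystep_op: "(wy :: 'k::field_char_0 wop) \<circ> hop 0 [:- (s - 1), 1:] = hop 0 [:- s, 1:] \<circ> wy"
proof -
  have "(wy :: 'k wop) \<circ> hop 0 [:- (s - 1), 1:] = hop (-1 + 0) ([:- (s - 1), 1:] * (1 \<circ>\<^sub>p [:- of_int 0, 1:]))"
    unfolding wy_hop by (rule hop_comp[OF good0])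
  also have "\<dots> = hop (0 + -1) (1 * ([:- s, 1:] \<circ>\<^sub>p [:- of_int (-1), 1:]))"
    by (rule hop_cong) (simp_all add: poly_pcompose algebra_simps)
  also have "\<dots> = hop 0 [:- s, 1:] \<circ> wy" unfolding wy_hop by (rule hop_comp[symmetric]) (simp add: good_def)
  finally show ?thesis .
qed

lemma yx_hop: "(wy \<circ> wx :: 'k::field_char_0 wop) = hop 0 [:0,1:]"
proof -
  have "(wy \<circ> wx :: 'k wop) = hop (-1 + 1) ([:0,1:] * (1 \<circ>\<^sub>p [:- of_int 1, 1:]))"
    unfolding wx_hop wy_hop by (rule hop_comp) (simp add: good_def)
  also have "\<dots> = hop 0 [:0,1:]" by (rule hop_cong) (simp_all add: poly_pcompose)
  finally show ?thesis .
qed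

lemma whom_hop0': "whom 0 (hop 0 P)" by (rule whom_hop0)

context grm
begin

lemma act_hop0_add: "u \<in> gcar M \<Longrightarrow> gact M u (hop 0 (A + B)) = gadd M (gact M u (hop 0 A)) (gact M u (hop 0 B))"
  using act_oadd[OF _ weyl_hop0 weyl_hop0, of u A B] by (simp add: hop_add_poly oadd_eq)

lemma act_scalar_nz:
  assumes u: "u \<in> gcar M" "u \<noteq> gzero M" and c: "c \<noteq> 0"
  shows "gact M u (oscal c) \<noteq> gzero M"
proof
  assume z: "gact M u (oscal c) = gzero M"
  have "gact M u (oscal c \<circ> oscal (inverse c)) = gact M (gact M u (oscal c)) (oscal (inverse c))"
    by (rule act_comp[OF u(1) weyl_sc weyl_sc])
  also have "\<dots> = gzero M" using z zero_act[OF weyl_sc] by simp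
  finally show False using oscal_inv[OF c] act_id[OF u(1)] u(2) by simp
qed

lemma act_diff_zero:
  assumes u: "u \<in> gcar M" and A: "A \<in> weyl" and B: "B \<in> weyl" and e: "gact M u A = gact M u B"
  shows "gact M u (A - B) = gzero M"
proof -
  have Bn: "B \<circ> oscal (-1) = - B" by (rule ext) (simp add: oscal_def weyl_hop_neg[OF B])
  have "gact M u (A - B) = gact M u (oadd A (B \<circ> oscal (-1)))" by (simp only: Bn oadd_minus)
  also have "\<dots> = gadd M (gact M u A) (gact M u (B \<circ> oscal (-1)))"
    by (rule act_oadd[OF u A weyl_mult[OF B weyl_sc]])
  also have "gact M u (B \<circ> oscal (-1)) = neg (gact M u B)" unfolding neg_def by (rule act_comp[OF u B weyl_sc])
  also have "gadd M (gact M u A) (neg (gact M u B)) = gzero M" using e add_neg[OF act_car[OF u B]] by simp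
  finally show ?thesis .
qed

definition E :: "'v \<Rightarrow> int \<Rightarrow> 'k \<Rightarrow> bool" where
  "E f j s \<longleftrightarrow> f \<in> gdeg M j \<and> f \<noteq> gzero M \<and> gact M f (hop 0 [:- s, 1:]) = gzero M"

lemma E_car: "E f j s \<Longrightarrow> f \<in> gcar M" unfolding E_def using deg_car by blast

lemma E_scalar: "E f j s \<Longrightarrow> gact M f (hop 0 (P + [:c:])) = gact M f (hop 0 P) \<Longrightarrow> True" by simp

lemma E_x:
  assumes E: "E f j s" and nz: "gact M f wx \<noteq> gzero M"
  shows "E (gact M f wx) (j + 1) (s + 1)"
  unfolding E_def
proof (intro conjI)
  have f: "f \<in> gcar M" using E_car[OF E] .
  show "gact M f wx \<in> gdeg M (j + 1)" using act_deg[of f j 1 wx] E whom_x unfolding E_def by blast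
  show "gact M f wx \<noteq> gzero M" by (rule nz)
  have "gact M (gact M f wx) (hop 0 [:- (s + 1), 1:]) = gact M f (wx \<circ> hop 0 [:- (s + 1), 1:])"
    by (rule act_comp[OF f weyl_x weyl_hop0, symmetric])
  also have "\<dots> = gact M (gact M f (hop 0 [:- s, 1:])) wx" unfolding xstep_op by (rule act_comp[OF f weyl_hop0 weyl_x])
  also have "\<dots> = gzero M" using E zero_act[OF weyl_x] unfolding E_def by simp
  finally show "gact M (gact M f wx) (hop 0 [:- (s + 1), 1:]) = gzero M" .
qed

lemma E_y:
  assumes E: "E f j s" and nz: "gact M f wy \<noteq> gzero M"
  shows "E (gact M f wy) (j - 1) (s - 1)"
  unfolding E_def
proof (intro conjI)
  have f: "f \<in> gcar M" using E_car[OF E] .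
  have "gact M f wy \<in> gdeg M (j + -1)" using act_deg[of f j "-1" wy] E whom_y unfolding E_def by blast
  then show "gact M f wy \<in> gdeg M (j - 1)" by simp
  show "gact M f wy \<noteq> gzero M" by (rule nz)
  have "gact M (gact M f wy) (hop 0 [:- (s - 1), 1:]) = gact M f (wy \<circ> hop 0 [:- (s - 1), 1:])"
    by (rule act_comp[OF f weyl_y weyl_hop0, symmetric])
  also have "\<dots> = gact M (gact M f (hop 0 [:- s, 1:])) wy" unfolding ystep_op by (rule act_comp[OF f weyl_hop0 weyl_y])
  also have "\<dots> = gzero M" using E zero_act[OF weyl_y] unfolding E_def by simp
  finally show "gact M (gact M f wy) (hop 0 [:- (s - 1), 1:]) = gzero M" .
qed

lemma E_eval:
  assumes E: "E f j s"
  shows "gact M f (hop 0 ([:- s, 1:] + [:c:])) = gact M f (oscal c)"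
proof -
  have f: "f \<in> gcar M" using E_car[OF E] .
  have "gact M f (hop 0 ([:- s, 1:] + [:c:])) = gadd M (gact M f (hop 0 [:- s, 1:])) (gact M f (hop 0 [:c:]))"
    by (rule act_hop0_add[OF f])
  also have "\<dots> = gact M f (oscal c)" using E zero_add[OF act_car[OF f weyl_sc]] unfolding E_def by (simp add: hop0_oscal)
  finally show ?thesis .
qed

lemma E_x_nz:
  assumes E: "E f j s" and s: "s + 1 \<noteq> 0"
  shows "gact M f wx \<noteq> gzero M"
proof
  assume z: "gact M f wx = gzero M"
  have f: "f \<in> gcar M" using E_car[OF E] .
  have "gact M f (wx \<circ> wy) = gzero M" using act_comp[OF f weyl_x weyl_y] z zero_act[OF weyl_y] by simp
  moreover have "(wx \<circ> wy :: 'k wop) = hop 0 ([:- s, 1:] + [:s + 1:])" unfolding z_hop by (rule hop_cong) simp_all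
  ultimately have "gact M f (hop 0 ([:- s, 1:] + [:s + 1:])) = gzero M" by simp
  then have "gact M f (oscal (s + 1)) = gzero M" by (simp only: E_eval[OF E])
  then show False using act_scalar_nz[OF f _ s] E unfolding E_def by blast
qed

lemma E_y_nz:
  assumes E: "E f j s" and s: "s \<noteq> 0"
  shows "gact M f wy \<noteq> gzero M"
proof
  assume z: "gact M f wy = gzero M"
  have f: "f \<in> gcar M" using E_car[OF E] .
  have "gact M f (wy \<circ> wx) = gzero M" using act_comp[OF f weyl_y weyl_x] z zero_act[OF weyl_x] by simp
  moreover have "(wy \<circ> wx :: 'k wop) = hop 0 ([:- s, 1:] + [:s:])" unfolding yx_hop by (rule hop_cong) simp_all
  ultimately have "gact M f (hop 0 ([:- s, 1:] + [:s:])) = gzero M" by simp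
  then have "gact M f (oscal s) = gzero M" by (simp only: E_eval[OF E])
  then show False using act_scalar_nz[OF f _ s] E unfolding E_def by blast
qed

lemma walk_nonint:
  assumes "E f j s" "s \<notin> \<int>"
  shows "\<exists>f'. E f' 0 (s - of_int j)"
  using assms
proof (induct "nat \<bar>j\<bar>" arbitrary: f j s)
  case 0 then show ?case by auto
next
  case (Suc n)
  show ?case
  proof (cases "0 < j")
    case True
    have "s \<noteq> 0" using Suc(4) by auto
    then have "E (gact M f wy) (j - 1) (s - 1)" using E_y[OF Suc(3)] E_y_nz[OF Suc(3)] by blast
    moreover have "s - 1 \<notin> \<int>" using Suc(4) by (metis Ints_1 Ints_add diff_add_cancel)
    moreover have "n = nat \<bar>j - 1\<bar>" using Suc(2) True by linarith
    ultimately obtain f' where f': "E f' 0 (s - 1 - of_int (j - 1))" using Suc(1) by blast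
    have "s - 1 - of_int (j - 1) = s - of_int j" by simp
    then show ?thesis using f' by auto
  next
    case False
    have "s + 1 \<noteq> 0" using Suc(4) by (metis Ints_1 Ints_minus add.commute add_eq_0_iff)
    then have "E (gact M f wx) (j + 1) (s + 1)" using E_x[OF Suc(3)] E_x_nz[OF Suc(3)] by blast
    moreover have "s + 1 \<notin> \<int>" using Suc(4) by (metis Ints_1 Ints_diff add_diff_cancel)
    moreover have "n = nat \<bar>j + 1\<bar>" using Suc(2) False by linarith
    ultimately obtain f' where f': "E f' 0 (s + 1 - of_int (j + 1))" using Suc(1) by blast
    have "s + 1 - of_int (j + 1) = s - of_int j" by simp
    then show ?thesis using f' by auto
  qed
qed

lemma walk_int:
  assumes "E f j (of_int t)"
  shows "(\<exists>f' j'. E f' j' (-1)) \<or> (\<exists>f' j'. f' \<in> gdeg M j' \<and> f' \<noteq> gzero M \<and> gact M f' wy = gzero M)"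
  using assms
proof (induct "nat \<bar>t + 1\<bar>" arbitrary: f j t)
  case 0
  then have "t = -1" by simp
  then show ?case using 0 by auto
next
  case (Suc n)
  show ?case
  proof (cases "t < -1")
    case True
    have "(of_int t :: 'k) + 1 \<noteq> 0"
    proof
      assume "(of_int t :: 'k) + 1 = 0"
      then have "(of_int (t + 1) :: 'k) = 0" by simp
      then have "t + 1 = 0" by (simp only: of_int_eq_0_iff)
      then show False using True by simp
    qed
    then have "E (gact M f wx) (j + 1) (of_int t + 1)" using E_x[OF Suc(3)] E_x_nz[OF Suc(3)] by blast
    then have "E (gact M f wx) (j + 1) (of_int (t + 1))" by simp
    moreover have "n = nat \<bar>t + 1 + 1\<bar>" using Suc(2) True by linarith
    ultimately show ?thesis using Suc(1) by blast
  next
    case False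
    show ?thesis
    proof (cases "gact M f wy = gzero M")
      case True
      then show ?thesis using Suc(3) unfolding E_def by blast
    next
      case nz: False
      have "E (gact M f wy) (j - 1) (of_int t - 1)" using E_y[OF Suc(3) nz] .
      then have "E (gact M f wy) (j - 1) (of_int (t - 1))" by simp
      moreover have "n = nat \<bar>t - 1 + 1\<bar>" using Suc(2) False by linarith
      ultimately show ?thesis using Suc(1) by blast
    qed
  qed
qed

lemma root_descent:
  assumes alg: "\<forall>p :: 'k poly. 0 < degree p \<longrightarrow> (\<exists>r. poly p r = 0)"
  shows "P \<noteq> 0 \<Longrightarrow> m \<in> gdeg M d \<Longrightarrow> m \<noteq> gzero M \<Longrightarrow> gact M m (hop 0 P) = gzero M \<Longrightarrow> \<exists>m' s. E m' d s"
proof (induct "degree P" arbitrary: P m rule: less_induct)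
  case less
  have mc: "m \<in> gcar M" using less(3) deg_car by blast
  show ?case
  proof (cases "degree P = 0")
    case True
    then obtain c where c: "P = [:c:]" by (metis degree_eq_zeroE)
    then have "c \<noteq> 0" using less(2) by simp
    then have "gact M m (oscal c) \<noteq> gzero M" using act_scalar_nz[OF mc less(4)] by blast
    moreover have "gact M m (oscal c) = gzero M" using less(5) unfolding c hop0_oscal .
    ultimately show ?thesis by blast
  next
    case False
    then obtain r where r: "poly P r = 0" using alg by blast
    then obtain R where R: "P = [:- r, 1:] * R" using poly_eq_0_iff_dvd by (metis dvdE)
    have R0: "R \<noteq> 0" using less(2) R by auto
    have "degree P = degree [:- r, 1:] + degree R" unfolding R by (rule degree_mult_eq) (use R0 in auto)
    then have dR: "degree R < degree P" by simp
    have hP: "hop 0 P = hop 0 R \<circ> hop 0 [:- r, 1:]" unfolding hop_comp0 R ..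
    have mP: "gact M m (hop 0 P) = gact M (gact M m (hop 0 R)) (hop 0 [:- r, 1:])"
      unfolding hP by (rule act_comp[OF mc weyl_hop0 weyl_hop0])
    show ?thesis
    proof (cases "gact M m (hop 0 R) = gzero M")
      case True
      then show ?thesis using less(1)[OF dR R0 less(3,4)] by blast
    next
      case False
      have "gact M m (hop 0 R) \<in> gdeg M (d + 0)" by (rule act_deg[OF less(3) whom_hop0])
      then have "E (gact M m (hop 0 R)) d r"
        unfolding E_def using False mP less(5) by simp
      then show ?thesis by blast
    qed
  qed
qed

lemma ann_exists:
  assumes s: "is_simple M" and m: "m \<in> gdeg M d" "m \<noteq> gzero M"
  shows "\<exists>P. P \<noteq> 0 \<and> gact M m (hop 0 P) = gzero M"
proof -
  have mc: "m \<in> gcar M" using m(1) deg_car by blast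
  let ?z = "hop 0 [:1,1:] :: 'k wop"
  define mz where "mz = gact M m ?z"
  have mzd: "mz \<in> gdeg M d" using act_deg[OF m(1) whom_hop0, of "[:1,1:]"] unfolding mz_def by simp
  have mzc: "mz \<in> gcar M" using mzd deg_car by blast
  let ?N = "{gact M mz b | b. b \<in> weyl}"
  have "?N = {gzero M} \<or> ?N = gcar M"
    by (rule s[unfolded is_simple_def, THEN conjunct2, rule_format, OF cyclic_gsub[OF mzd]])
  then show ?thesis
  proof
    assume N0: "?N = {gzero M}"
    have "mz \<in> ?N" using act_id[OF mzc] weyl_id by force
    then have "mz = gzero M" using N0 by blast
    then show ?thesis unfolding mz_def by (intro exI[of _ "[:1,1:]"]) simp
  next
    assume N1: "?N = gcar M"
    then obtain b where b: "b \<in> weyl" "m = gact M mz b" using mc by blast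
    obtain ns h where H: "distinct ns" "\<forall>n\<in>set ns. whom n (h n)" "b = sum_list (map h ns)"
       "gact M mz b = gsum M (map (\<lambda>j. gact M mz (h (j - d))) (map (\<lambda>n. d + n) ns))"
      using act_whom_decomp[OF mzd b(1)] by blast
    have dj: "distinct (map (\<lambda>n. d + n) ns)" using H(1) by (simp add: distinct_map inj_on_def)
    have Fd: "\<forall>i\<in>set (map (\<lambda>n. d + n) ns). gact M mz (h (i - d)) \<in> gdeg M i"
    proof
      fix i assume "i \<in> set (map (\<lambda>n. d + n) ns)"
      then have "i - d \<in> set ns" by auto
      then have "gact M mz (h (i - d)) \<in> gdeg M (d + (i - d))" using act_deg[OF mzd] H(2) by blast
      then show "gact M mz (h (i - d)) \<in> gdeg M i" by simp
    qed
    have md: "m = gsum M (map (\<lambda>i. gact M mz (h (i - d))) (map (\<lambda>n. d + n) ns))" using H(4) b(2) by simp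
    note UD = unique_decomp[OF m(1) dj Fd md]
    have din: "d \<in> set (map (\<lambda>n. d + n) ns)" using UD(2) m(2) by blast
    then have n0: "0 \<in> set ns" by auto
    have "gact M mz (h (d - d)) = (if d = d then m else gzero M)" by (rule UD(1)[rule_format, OF din])
    then have e0: "gact M mz (h 0) = m" by simp
    obtain R where R: "good 0 R" "h 0 = hop 0 R" using whom_hop H(2) n0 by blast
    have "gact M mz (h 0) = gact M m (?z \<circ> hop 0 R)" unfolding mz_def R(2) by (rule act_comp[OF mc weyl_hop0 weyl_hop0, symmetric])
    also have "?z \<circ> hop 0 R = hop 0 (R * [:1,1:])" by (rule hop_comp0)
    finally have c1: "gact M mz (h 0) = gact M m (hop 0 (R * [:1,1:]))" .
    have c2: "gact M m (hop 0 1) = m" using act_id[OF mc] unfolding id_hop .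
    have e1: "gact M m (hop 0 (R * [:1,1:])) = gact M m (hop 0 1)" using c1 e0 c2 by simp
    have "gact M m (hop 0 (R * [:1,1:]) - hop 0 1) = gzero M" by (rule act_diff_zero[OF mc weyl_hop0 weyl_hop0 e1])
    then have z: "gact M m (hop 0 (R * [:1,1:] - 1)) = gzero M" by (simp add: hop_minus_poly)
    have "poly (R * [:1,1:] - 1) (-1) \<noteq> 0" by simp
    then have "R * [:1,1:] - 1 \<noteq> 0" by (metis poly_0)
    then show ?thesis using z by blast
  qed
qed

lemma classify_grm:
  assumes alg: "\<forall>p :: 'k poly. 0 < degree p \<longrightarrow> (\<exists>r. poly p r = 0)" and s: "is_simple M"
  shows "(\<exists>n. g_iso M (gshift n Xmod)) \<or> (\<exists>n. g_iso M (gshift n Ymod)) \<or> (\<exists>l. l \<notin> \<int> \<and> g_iso M (Mmod l))"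
proof -
  obtain d m where m: "m \<in> gdeg M d" "m \<noteq> gzero M" using simple_hom_ex[OF s] by blast
  obtain P where P: "P \<noteq> 0" "gact M m (hop 0 P) = gzero M" using ann_exists[OF s m] by blast
  obtain f sg where E: "E f d sg" using root_descent[OF alg P(1) m P(2)] by blast
  have Xc: "\<exists>n. g_iso M (gshift n Xmod)" if f: "f' \<in> gdeg M j" "f' \<noteq> gzero M" "gact M f' wx = gzero M" for f' j
  proof -
    have "g_iso M (gshift j (qmod wx))"
      by (rule qm.iso_from_gen[OF qmX grm s f X_simple])
    then show ?thesis unfolding Xmod_def by blast
  qed
  have Yc: "\<exists>n. g_iso M (gshift n Ymod)" if f: "f' \<in> gdeg M j" "f' \<noteq> gzero M" "gact M f' wy = gzero M" for f' j
  proof -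
    have "g_iso M (gshift j (qmod wy))"
      by (rule qm.iso_from_gen[OF qmY grm s f Y_simple0])
    moreover have "gshift (j - 1) Ymod = gshift j (qmod wy)" unfolding Ymod_def gshift_gshift by simp
    ultimately show ?thesis by metis
  qed
  show ?thesis
  proof (cases "sg \<in> \<int>")
    case False
    obtain f' where E': "E f' 0 (sg - of_int d)" using walk_nonint[OF E False] by blast
    define l where "l = - 1 - (sg - of_int d)"
    have l: "l \<notin> \<int>"
    proof
      assume "l \<in> \<int>"
      then have "- 1 - l + of_int d \<in> \<int>" by (intro Ints_add Ints_diff Ints_minus) (auto)
      then show False using False unfolding l_def by simp
    qed
    have "hop 0 [:- (sg - of_int d), 1:] = (hop 0 [:1 + l, 1:] :: 'k wop)" unfolding l_def by (rule hop_cong) simp_all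
    then have k: "gact M f' (oadd (wx \<circ> wy) (oscal l)) = gzero M" using E' unfolding E_def M_hop by simp
    have "g_iso M (gshift 0 (qmod (oadd (wx \<circ> wy) (oscal l))))"
      by (rule qm.iso_from_gen[OF qmM grm s _ _ k]) (use E' M_simple[OF l] in \<open>auto simp: E_def Mmod_def\<close>)
    then show ?thesis using l unfolding gshift_0 Mmod_def by blast
  next
    case True
    then obtain t where t: "sg = of_int t" by (metis Ints_cases)
    from walk_int[OF E[unfolded t]] show ?thesis
    proof
      assume "\<exists>f' j'. E f' j' (-1)"
      then obtain f' j' where E': "E f' j' (-1)" by blast
      have f'c: "f' \<in> gcar M" using E_car[OF E'] .
      have z: "gact M f' (wx \<circ> wy) = gzero M" using E' unfolding E_def z_hop by simp
      show ?thesis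
      proof (cases "gact M f' wx = gzero M")
        case True
        then show ?thesis using Xc E' unfolding E_def by blast
      next
        case False
        have "gact M f' wx \<in> gdeg M (j' + 1)" using act_deg[OF _ whom_x] E' unfolding E_def by blast
        moreover have "gact M (gact M f' wx) wy = gzero M" using act_comp[OF f'c weyl_x weyl_y] z by simp
        ultimately show ?thesis using Yc False by blast
      qed
    next
      assume "\<exists>f' j'. f' \<in> gdeg M j' \<and> f' \<noteq> gzero M \<and> gact M f' wy = gzero M"
      then show ?thesis using Yc by blast
    qed
  qed
qed

end



lemma noniso_core:
  fixes N1 :: "('k::field_char_0 wop, 'v) rgr" and N2 :: "('k wop, 'w) rgr"
  assumes i: "g_iso N1 N2" and g1: "is_grmod N1" and g2: "is_grmod N2"
    and u: "u \<in> gdeg N1 j" "u \<noteq> gzero N1" and r: "r \<in> weyl" and k: "gact N1 u r = gzero N1"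
  shows "\<exists>v. v \<in> gdeg N2 j \<and> v \<noteq> gzero N2 \<and> gact N2 v r = gzero N2"
proof -
  obtain f where f: "is_ghom N1 N2 f" "bij_betw f (gcar N1) (gcar N2)" using i unfolding g_iso_def by blast
  show ?thesis using gen_image[OF g1 g2 f u r k] by blast
qed

lemma genX: "wcoset wx id \<in> gdeg (qmod (wx :: 'k::field_char_0 wop)) 0"
  "wcoset wx id \<noteq> gzero (qmod (wx :: 'k::field_char_0 wop))"
  "gact (qmod wx) (wcoset wx id) wx = gzero (qmod (wx :: 'k::field_char_0 wop))"
proof -
  show "wcoset wx id \<in> gdeg (qmod (wx :: 'k wop)) 0" by (rule qm.gen_props(1)[OF qmX])
  show "gact (qmod wx) (wcoset wx id) wx = gzero (qmod (wx :: 'k wop))" by (rule qm.gen_props(2)[OF qmX])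
  have "wcoset wx (hop 0 1) \<noteq> wcoset wx (0 :: 'k wop)" using X_zero[OF good0, of 1] by simp
  then show "wcoset wx id \<noteq> gzero (qmod (wx :: 'k wop))" by (simp add: id_hop qm.qzero[OF qmX])
qed

lemma genY: "wcoset wy id \<in> gdeg (qmod (wy :: 'k::field_char_0 wop)) 0"
  "wcoset wy id \<noteq> gzero (qmod (wy :: 'k::field_char_0 wop))"
  "gact (qmod wy) (wcoset wy id) wy = gzero (qmod (wy :: 'k::field_char_0 wop))"
proof -
  show "wcoset wy id \<in> gdeg (qmod (wy :: 'k wop)) 0" by (rule qm.gen_props(1)[OF qmY])
  show "gact (qmod wy) (wcoset wy id) wy = gzero (qmod (wy :: 'k wop))" by (rule qm.gen_props(2)[OF qmY])
  have "wcoset wy (hop 0 1) \<noteq> wcoset wy (0 :: 'k wop)" using Y_zero[OF good0, of 1] by simp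
  then show "wcoset wy id \<noteq> gzero (qmod (wy :: 'k wop))" by (simp add: id_hop qm.qzero[OF qmY])
qed

lemma genM:
  assumes l: "(l :: 'k::field_char_0) \<notin> \<int>"
  shows "wcoset (oadd (wx \<circ> wy) (oscal l)) id \<in> gdeg (Mmod l) 0"
    "wcoset (oadd (wx \<circ> wy) (oscal l)) id \<noteq> gzero (Mmod l)"
    "gact (Mmod l) (wcoset (oadd (wx \<circ> wy) (oscal l)) id) (oadd (wx \<circ> wy) (oscal l)) = gzero (Mmod l)"
proof -
  show "wcoset (oadd (wx \<circ> wy) (oscal l)) id \<in> gdeg (Mmod l) 0" unfolding Mmod_def by (rule qm.gen_props(1)[OF qmM])
  show "gact (Mmod l) (wcoset (oadd (wx \<circ> wy) (oscal l)) id) (oadd (wx \<circ> wy) (oscal l)) = gzero (Mmod l)"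
    unfolding Mmod_def by (rule qm.gen_props(2)[OF qmM])
  have "wcoset (oadd (wx \<circ> wy) (oscal l)) (hop 0 1) \<noteq> wcoset (oadd (wx \<circ> wy) (oscal l)) 0"
    using M_zero[OF l good0, of 1] by simp
  then show "wcoset (oadd (wx \<circ> wy) (oscal l)) id \<noteq> gzero (Mmod l)" by (simp add: id_hop qm.qzero[OF qmM] Mmod_def)
qed

lemma grX: "is_grmod (gshift n (Xmod :: ('k::field_char_0 wop, 'k wop set) rgr))"
  unfolding Xmod_def by (rule grmod_shift[OF qm.q_grmod[OF qmX]])
lemma grY: "is_grmod (gshift n (Ymod :: ('k::field_char_0 wop, 'k wop set) rgr))"
  unfolding Ymod_def gshift_gshift by (rule grmod_shift[OF qm.q_grmod[OF qmY]])
lemma grM: "is_grmod (Mmod (l :: 'k::field_char_0))"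
  unfolding Mmod_def by (rule qm.q_grmod[OF qmM])

theorem lemma4p1:
  fixes M :: "('k::field_char_0 wop, 'v) rgr"
  assumes alg_closed: "\<forall>p :: 'k poly. 0 < degree p \<longrightarrow> (\<exists>r. poly p r = 0)"
  shows
    "(\<forall>n. is_grmod (gshift n (Xmod :: ('k wop, 'k wop set) rgr)) \<and> is_simple (gshift n (Xmod :: ('k wop, 'k wop set) rgr))) \<and>
     (\<forall>n. is_grmod (gshift n (Ymod :: ('k wop, 'k wop set) rgr)) \<and> is_simple (gshift n (Ymod :: ('k wop, 'k wop set) rgr))) \<and>
     (\<forall>l :: 'k. l \<notin> \<int> \<longrightarrow> is_grmod (Mmod l) \<and> is_simple (Mmod l)) \<and>
     ((is_grmod M \<and> is_simple M) \<longrightarrow>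
        (\<exists>n. g_iso M (gshift n Xmod)) \<or> (\<exists>n. g_iso M (gshift n Ymod)) \<or>
        (\<exists>l. l \<notin> \<int> \<and> g_iso M (Mmod l))) \<and>
     (\<forall>n m. g_iso (gshift n (Xmod :: ('k wop, 'k wop set) rgr)) (gshift m Xmod) \<longrightarrow> n = m) \<and>
     (\<forall>n m. g_iso (gshift n (Ymod :: ('k wop, 'k wop set) rgr)) (gshift m Ymod) \<longrightarrow> n = m) \<and>
     (\<forall>l l' :: 'k. l \<notin> \<int> \<longrightarrow> l' \<notin> \<int> \<longrightarrow> g_iso (Mmod l) (Mmod l') \<longrightarrow> l = l') \<and>
     (\<forall>n m. \<not> g_iso (gshift n (Xmod :: ('k wop, 'k wop set) rgr)) (gshift m Ymod) \<and>
            \<not> g_iso (gshift m (Ymod :: ('k wop, 'k wop set) rgr)) (gshift n Xmod)) \<and>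
     (\<forall>n (l :: 'k). l \<notin> \<int> \<longrightarrow> \<not> g_iso (gshift n Xmod) (Mmod l) \<and> \<not> g_iso (Mmod l) (gshift n Xmod)) \<and>
     (\<forall>n (l :: 'k). l \<notin> \<int> \<longrightarrow> \<not> g_iso (gshift n Ymod) (Mmod l) \<and> \<not> g_iso (Mmod l) (gshift n Ymod))"
proof (intro conjI allI impI)
  fix n :: int
  show "is_grmod (gshift n (Xmod :: ('k wop, 'k wop set) rgr))" by (rule grX)
  show "is_simple (gshift n (Xmod :: ('k wop, 'k wop set) rgr))"
    unfolding Xmod_def by (rule simple_shift[OF qm.q_grmod[OF qmX] X_simple])
next
  fix n :: int
  show "is_grmod (gshift n (Ymod :: ('k wop, 'k wop set) rgr))" by (rule grY)
  show "is_simple (gshift n (Ymod :: ('k wop, 'k wop set) rgr))"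
    unfolding Ymod_def gshift_gshift by (rule simple_shift[OF qm.q_grmod[OF qmY] Y_simple0])
next
  fix l :: 'k assume l: "l \<notin> \<int>"
  show "is_grmod (Mmod l)" by (rule grM)
  show "is_simple (Mmod l)" by (rule M_simple[OF l])
next
  assume "is_grmod M \<and> is_simple M"
  then have Mg: "is_grmod M" and sM: "is_simple M" by auto
  interpret grm M by unfold_locales (rule Mg)
  show "(\<exists>n. g_iso M (gshift n Xmod)) \<or> (\<exists>n. g_iso M (gshift n Ymod)) \<or> (\<exists>l. l \<notin> \<int> \<and> g_iso M (Mmod l))"
    by (rule classify_grm[OF alg_closed sM])
next
  fix n m :: int assume i: "g_iso (gshift n (Xmod :: ('k wop, 'k wop set) rgr)) (gshift m Xmod)"
  have "\<exists>v. v \<in> gdeg (gshift m (Xmod :: ('k wop, 'k wop set) rgr)) n \<and> v \<noteq> gzero (gshift m (Xmod :: ('k wop, 'k wop set) rgr)) \<and> gact (gshift m Xmod) v wx = gzero (gshift m (Xmod :: ('k wop, 'k wop set) rgr))"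
    by (rule noniso_core[OF i grX grX _ _ weyl_x]) (use genX in \<open>simp_all add: Xmod_def\<close>)
  then obtain v where "v \<in> gdeg (qmod wx) (n - m)" "v \<noteq> gzero (qmod (wx :: 'k wop))" "gact (qmod wx) v wx = gzero (qmod (wx :: 'k wop))"
    by (auto simp: Xmod_def)
  then have "n - m = 0" by (rule X_kill_x)
  then show "n = m" by simp
next
  fix n m :: int assume i: "g_iso (gshift n (Ymod :: ('k wop, 'k wop set) rgr)) (gshift m Ymod)"
  have "\<exists>v. v \<in> gdeg (gshift m (Ymod :: ('k wop, 'k wop set) rgr)) (n + 1) \<and> v \<noteq> gzero (gshift m (Ymod :: ('k wop, 'k wop set) rgr)) \<and> gact (gshift m Ymod) v wy = gzero (gshift m (Ymod :: ('k wop, 'k wop set) rgr))"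
    by (rule noniso_core[OF i grY grY _ _ weyl_y]) (use genY in \<open>simp_all add: Ymod_def\<close>)
  then obtain v where "v \<in> gdeg (qmod wy) (n - m)" "v \<noteq> gzero (qmod (wy :: 'k wop))" "gact (qmod wy) v wy = gzero (qmod (wy :: 'k wop))"
    by (auto simp: Ymod_def algebra_simps)
  then have "n - m = 0" by (rule Y_kill_y)
  then show "n = m" by simp
next
  fix l l' :: 'k assume l: "l \<notin> \<int>" and l': "l' \<notin> \<int>" and i: "g_iso (Mmod l) (Mmod l')"
  obtain v where v: "v \<in> gdeg (Mmod l') 0" "v \<noteq> gzero (Mmod l')" "gact (Mmod l') v (oadd (wx \<circ> wy) (oscal l)) = gzero (Mmod l')"
    using noniso_core[OF i grM grM genM(1,2)[OF l] wz_weyl genM(3)[OF l]] by blast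
  have "l' = l" by (rule M_kill_z[OF l' l v])
  then show "l = l'" by simp
next
  fix n m :: int
  show "\<not> g_iso (gshift n (Xmod :: ('k wop, 'k wop set) rgr)) (gshift m Ymod)"
  proof
    assume i: "g_iso (gshift n (Xmod :: ('k wop, 'k wop set) rgr)) (gshift m Ymod)"
    have "\<exists>v. v \<in> gdeg (gshift m (Ymod :: ('k wop, 'k wop set) rgr)) n \<and> v \<noteq> gzero (gshift m (Ymod :: ('k wop, 'k wop set) rgr)) \<and> gact (gshift m Ymod) v wx = gzero (gshift m (Ymod :: ('k wop, 'k wop set) rgr))"
      by (rule noniso_core[OF i grX grY _ _ weyl_x]) (use genX in \<open>simp_all add: Xmod_def\<close>)
    then obtain v where "v \<in> gdeg (qmod wy) (n - m - 1)" "v \<noteq> gzero (qmod (wy :: 'k wop))" "gact (qmod wy) v wx = gzero (qmod (wy :: 'k wop))"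
      by (auto simp: Ymod_def algebra_simps)
    then show False using Y_kill_x by blast
  qed
  show "\<not> g_iso (gshift m (Ymod :: ('k wop, 'k wop set) rgr)) (gshift n Xmod)"
  proof
    assume i: "g_iso (gshift m (Ymod :: ('k wop, 'k wop set) rgr)) (gshift n Xmod)"
    have "\<exists>v. v \<in> gdeg (gshift n (Xmod :: ('k wop, 'k wop set) rgr)) (m + 1) \<and> v \<noteq> gzero (gshift n (Xmod :: ('k wop, 'k wop set) rgr)) \<and> gact (gshift n Xmod) v wy = gzero (gshift n (Xmod :: ('k wop, 'k wop set) rgr))"
      by (rule noniso_core[OF i grY grX _ _ weyl_y]) (use genY in \<open>simp_all add: Ymod_def\<close>)
    then obtain v where "v \<in> gdeg (qmod wx) (m + 1 - n)" "v \<noteq> gzero (qmod (wx :: 'k wop))" "gact (qmod wx) v wy = gzero (qmod (wx :: 'k wop))"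
      by (auto simp: Xmod_def algebra_simps)
    then show False using X_kill_y by blast
  qed
next
  fix n :: int and l :: 'k assume l: "l \<notin> \<int>"
  show "\<not> g_iso (gshift n Xmod) (Mmod l)"
  proof
    assume i: "g_iso (gshift n Xmod) (Mmod l)"
    have "\<exists>v. v \<in> gdeg (Mmod l) n \<and> v \<noteq> gzero (Mmod l) \<and> gact (Mmod l) v wx = gzero (Mmod l)"
      by (rule noniso_core[OF i grX grM _ _ weyl_x]) (use genX in \<open>simp_all add: Xmod_def\<close>)
    then show False using M_kill_x[OF l] by blast
  qed
  show "\<not> g_iso (Mmod l) (gshift n Xmod)"
  proof
    assume i: "g_iso (Mmod l) (gshift n Xmod)"
    obtain v where "v \<in> gdeg (gshift n Xmod) 0" "v \<noteq> gzero (gshift n (Xmod :: ('k wop, 'k wop set) rgr))"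
        "gact (gshift n Xmod) v (oadd (wx \<circ> wy) (oscal l)) = gzero (gshift n (Xmod :: ('k wop, 'k wop set) rgr))"
      using noniso_core[OF i grM grX genM(1,2)[OF l] wz_weyl genM(3)[OF l]] by blast
    then have "v \<in> gdeg (qmod wx) (0 - n)" "v \<noteq> gzero (qmod (wx :: 'k wop))" "gact (qmod wx) v (oadd (wx \<circ> wy) (oscal l)) = gzero (qmod (wx :: 'k wop))"
      by (auto simp: Xmod_def)
    then show False using X_kill_z[OF l] by blast
  qed
next
  fix n :: int and l :: 'k assume l: "l \<notin> \<int>"
  show "\<not> g_iso (gshift n Ymod) (Mmod l)"
  proof
    assume i: "g_iso (gshift n Ymod) (Mmod l)"
    have "\<exists>v. v \<in> gdeg (Mmod l) (n + 1) \<and> v \<noteq> gzero (Mmod l) \<and> gact (Mmod l) v wy = gzero (Mmod l)"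
      by (rule noniso_core[OF i grY grM _ _ weyl_y]) (use genY in \<open>simp_all add: Ymod_def\<close>)
    then show False using M_kill_y[OF l] by blast
  qed
  show "\<not> g_iso (Mmod l) (gshift n Ymod)"
  proof
    assume i: "g_iso (Mmod l) (gshift n Ymod)"
    obtain v where "v \<in> gdeg (gshift n Ymod) 0" "v \<noteq> gzero (gshift n (Ymod :: ('k wop, 'k wop set) rgr))"
        "gact (gshift n Ymod) v (oadd (wx \<circ> wy) (oscal l)) = gzero (gshift n (Ymod :: ('k wop, 'k wop set) rgr))"
      using noniso_core[OF i grM grY genM(1,2)[OF l] wz_weyl genM(3)[OF l]] by blast
    then have "v \<in> gdeg (qmod wy) (0 - n - 1)" "v \<noteq> gzero (qmod (wy :: 'k wop))" "gact (qmod wy) v (oadd (wx \<circ> wy) (oscal l)) = gzero (qmod (wy :: 'k wop))"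
      by (auto simp: Ymod_def)
    then show False using Y_kill_z[OF l] by blast
  qed
qed


end
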